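(* Let $n\ge 5$ and let $\{C_i,C_j,C_k\}$ be a critical triplet in $\mathcal C_{[n]}$. Then $C_j$ and $C_k$ are not adjacent in $G_{NNI}(n)$; equivalently, $C_j$ and $C_k$ do not cover a common element of $S([n])$.
   Context: An $X$-tree is a pair $(T,\phi)$ with $T$ a finite tree and $\phi:X\to V(T)$ a map such that every vertex not in $\phi(X)$ has degree at least $3$; a vertex is labeled if it lies in $\phi(X)$. An $X$-forest is a set $\{(A,\mathcal T_A):A\in\pi\}$ where $\pi$ is a set partition of $X$ and each $\mathcal T_A$ is an $A$-tree. Contracting an edge $e=(u,v)$ removes $e$ and identifies $u,v$, the new vertex carrying the union of the labels. Deleting $e$ removes it without changing vertices; it is safe if each of $u,v$ is labeled or has degree greater than $3$. The Tuffley poset $S(X)$ is the set of $X$-forests with $\mathcal F'\le\mathcal F$ iff $\mathcal F'$ is obtained from $\mathcal F$ by a sequence of contractions and safe deletions; covers are single contractions or safe deletions. $\mathcal C_{X}$ is the set of maximal elements of $S(X)$: trees with leaves labeled bijectively by $X$ and internal vertices unlabeled of degree $3$. Here $X=[n]=\{1,\dots,n\}$. NNI: for $C\in\mathcal C_X$ and an internal edge $\alpha=(u,v)$ separating subtrees $A,B$ at $u$ from $C',D$ at $v$, swapping $B$ with $C'$ or $B$ with $D$ is a nearest neighbor interchange over $\alpha$. $G_{NNI}(n)$ is the graph on vertex set $\mathcal C_{[n]}$ with an edge between two trees iff they are related by one NNI. A critical triplet is a triple $\{C_i,C_j,C_k\}$ of elements of $\mathcal C_{[n]}$ such that: (1)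 $C_i$ has a leaf labeled $x$ whose leaf edge $e_x$ is adjacent to two internal edges $e_{x_1}$ and $e_{x_2}$; (2) $C_j\neq C_i$ and both $C_i$ and $C_j$ cover $F_j$, the element obtained from $C_i$ by contracting $e_{x_1}$; (3) $C_k\neq C_i$ and both $C_i$ and $C_k$ cover $F_k$, the element obtained from $C_i$ by contracting $e_{x_2}$. *)

theory Defs
  imports Main
begin

text \<open>X-forests are represented concretely as finite graphs on natural-number
vertices together with a labelling map; a vertex is labeled if it lies in lab ` X.
Elements of S(X) are isomorphism classes; every notion below is taken up to
label-preserving isomorphism.\<close>

record xforest =
  verts :: "nat set"
  edges :: "nat set set"
  lab   :: "nat \<Rightarrow> nat"

definition adj :: "nat set set \<Rightarrow> nat \<Rightarrow> nat \<Rightarrow> bool" where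
  "adj E u v \<longleftrightarrow> {u, v} \<in> E"

definition conn :: "nat set set \<Rightarrow> nat \<Rightarrow> nat \<Rightarrow> bool" where
  "conn E = (adj E)\<^sup>*\<^sup>*"

definition deg :: "nat set set \<Rightarrow> nat \<Rightarrow> nat" where
  "deg E v = card {e \<in> E. v \<in> e}"

definition labeled :: "nat set \<Rightarrow> xforest \<Rightarrow> nat \<Rightarrow> bool" where
  "labeled X F v \<longleftrightarrow> v \<in> lab F ` X"

text \<open>A finite simple graph without cycles (a forest) in which every unlabeled vertex
has degree at least 3 and every connected component contains a label; its components
(with label sets the blocks of the partition pi) are exactly the A-trees of an X-forest.\<close>
definition is_xforest :: "nat set \<Rightarrow> xforest \<Rightarrow> bool" where
  "is_xforest X F \<longleftrightarrow>
     finite (verts F) \<and>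
     (\<forall>e \<in> edges F. \<exists>u v. e = {u, v} \<and> u \<noteq> v \<and> u \<in> verts F \<and> v \<in> verts F) \<and>
     lab F ` X \<subseteq> verts F \<and>
     (\<forall>e \<in> edges F. \<forall>u v. e = {u, v} \<longrightarrow> \<not> conn (edges F - {e}) u v) \<and>
     (\<forall>v \<in> verts F. \<exists>x \<in> X. conn (edges F) v (lab F x)) \<and>
     (\<forall>v \<in> verts F. \<not> labeled X F v \<longrightarrow> deg (edges F) v \<ge> 3)"

definition is_xtree :: "nat set \<Rightarrow> xforest \<Rightarrow> bool" where
  "is_xtree X F \<longleftrightarrow> is_xforest X F \<and> verts F \<noteq> {} \<and>
     (\<forall>u \<in> verts F. \<forall>v \<in> verts F. conn (edges F) u v)"

definition iso :: "nat set \<Rightarrow> xforest \<Rightarrow> xforest \<Rightarrow> bool" where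
  "iso X F G \<longleftrightarrow> (\<exists>f. bij_betw f (verts F) (verts G) \<and>
      edges G = (\<lambda>e. f ` e) ` edges F \<and> (\<forall>x \<in> X. lab G x = f (lab F x)))"

definition contract :: "xforest \<Rightarrow> nat \<Rightarrow> nat \<Rightarrow> xforest" where
  "contract F u v =
     (let g = (\<lambda>w. if w = v then u else w) in
      \<lparr> verts = verts F - {v},
        edges = (\<lambda>e. g ` e) ` (edges F - {{u, v}}),
        lab = g \<circ> lab F \<rparr>)"

definition delete :: "xforest \<Rightarrow> nat \<Rightarrow> nat \<Rightarrow> xforest" where
  "delete F u v = F\<lparr> edges := edges F - {{u, v}} \<rparr>"

definition safe_del :: "nat set \<Rightarrow> xforest \<Rightarrow> nat \<Rightarrow> nat \<Rightarrow> bool" where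
  "safe_del X F u v \<longleftrightarrow>
     (labeled X F u \<or> deg (edges F) u > 3) \<and> (labeled X F v \<or> deg (edges F) v > 3)"

definition covers :: "nat set \<Rightarrow> xforest \<Rightarrow> xforest \<Rightarrow> bool" where
  "covers X F G \<longleftrightarrow> is_xforest X F \<and> is_xforest X G \<and>
     (\<exists>u v. {u, v} \<in> edges F \<and> u \<noteq> v \<and>
        (iso X G (contract F u v) \<or> (safe_del X F u v \<and> iso X G (delete F u v))))"

text \<open>Elements of C_X: X-trees whose leaves are labeled bijectively by X and whose
internal vertices are unlabeled of degree 3.\<close>
definition binary_xtree :: "nat set \<Rightarrow> xforest \<Rightarrow> bool" where
  "binary_xtree X C \<longleftrightarrow> is_xtree X C \<and> inj_on (lab C) X \<and>
     (\<forall>v \<in> verts C. (labeled X C v \<and> deg (edges C) v = 1) \<or>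
                      (\<not> labeled X C v \<and> deg (edges C) v = 3))"

definition nni_move :: "xforest \<Rightarrow> nat \<Rightarrow> nat \<Rightarrow> nat \<Rightarrow> nat \<Rightarrow> xforest" where
  "nni_move C u v b c = C\<lparr> edges := (edges C - {{u, b}, {v, c}}) \<union> {{u, c}, {v, b}} \<rparr>"

definition nni_adjacent :: "nat set \<Rightarrow> xforest \<Rightarrow> xforest \<Rightarrow> bool" where
  "nni_adjacent X C C' \<longleftrightarrow> binary_xtree X C \<and> binary_xtree X C' \<and>
     (\<exists>u v b c. {u, v} \<in> edges C \<and> u \<noteq> v \<and>
        \<not> labeled X C u \<and> \<not> labeled X C v \<and>
        {u, b} \<in> edges C \<and> b \<noteq> u \<and> b \<noteq> v \<and>
        {v, c} \<in> edges C \<and> c \<noteq> v \<and> c \<noteq> u \<and>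
        iso X C' (nni_move C u v b c))"

text \<open>Critical triplet: the leaf x (vertex lab Ci x) is attached to w, and the two other
edges at w, namely {w,a} (= e_x1) and {w,b} (= e_x2), are internal edges.\<close>
definition critical_triplet :: "nat set \<Rightarrow> xforest \<Rightarrow> xforest \<Rightarrow> xforest \<Rightarrow> bool" where
  "critical_triplet X Ci Cj Ck \<longleftrightarrow>
     binary_xtree X Ci \<and> binary_xtree X Cj \<and> binary_xtree X Ck \<and>
     (\<exists>x \<in> X. \<exists>w a b.
        {lab Ci x, w} \<in> edges Ci \<and> w \<noteq> lab Ci x \<and>
        {w, a} \<in> edges Ci \<and> {w, b} \<in> edges Ci \<and>
        a \<noteq> b \<and> a \<noteq> w \<and> b \<noteq> w \<and> a \<noteq> lab Ci x \<and> b \<noteq> lab Ci x \<and>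
        \<not> labeled X Ci w \<and> \<not> labeled X Ci a \<and> \<not> labeled X Ci b \<and>
        \<not> iso X Cj Ci \<and> covers X Ci (contract Ci w a) \<and> covers X Cj (contract Ci w a) \<and>
        \<not> iso X Ck Ci \<and> covers X Ci (contract Ci w b) \<and> covers X Ck (contract Ci w b))"

end

theory Submission
  imports Defs
begin


lemma adj_sym: "adj E u v = adj E v u"
  by (simp add: adj_def insert_commute)

lemma conn_refl[simp]: "conn E x x" by (simp add: conn_def)

lemma conn_sym: "conn E x y \<Longrightarrow> conn E y x"
  unfolding conn_def
proof (induction rule: rtranclp_induct)
  case base then show ?case by simp
next
  case (step y z)
  then show ?case using adj_sym by (metis converse_rtranclp_into_rtranclp)
qed

lemma conn_trans: "conn E x y \<Longrightarrow> conn E y z \<Longrightarrow> conn E x z"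
  unfolding conn_def by (rule rtranclp_trans)

lemma conn_edge: "{x,y} \<in> E \<Longrightarrow> conn E x y"
  unfolding conn_def adj_def by (simp add: r_into_rtranclp)

lemma conn_mono: "conn E x y \<Longrightarrow> E \<subseteq> E' \<Longrightarrow> conn E' x y"
  unfolding conn_def
proof (induction rule: rtranclp_induct)
  case base then show ?case by simp
next
  case (step y z)
  then show ?case by (metis adj_def rtranclp.rtrancl_into_rtrancl subsetD)
qed

lemma conn_map:
  assumes "conn G p q" and "\<And>y z. adj G y z \<Longrightarrow> adj G' (h y) (h z) \<or> h y = h z"
  shows "conn G' (h p) (h q)"
  using assms(1) unfolding conn_def
proof (induction rule: rtranclp_induct)
  case base then show ?case by simp
next
  case (step y z)
  then show ?case using assms(2) by (metis rtranclp.rtrancl_into_rtrancl)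
qed

lemma conn_avoid:
  assumes "conn G p z" "\<not> conn G p c"
  shows "conn {e\<in>G. c \<notin> e} p z"
  using assms unfolding conn_def
proof (induction rule: rtranclp_induct)
  case base then show ?case by simp
next
  case (step y z)
  have "y \<noteq> c" using step by auto
  moreover have "z \<noteq> c" using step by (metis rtranclp.rtrancl_into_rtrancl)
  ultimately have "adj {e\<in>G. c \<notin> e} y z" using step(2) by (auto simp: adj_def)
  then show ?case using step by (metis rtranclp.rtrancl_into_rtrancl)
qed

lemma conn_add_edge:
  assumes "conn (insert {\<alpha>,\<beta>} H) x y"
  shows "conn H x y \<or> (conn H x \<alpha> \<and> conn H \<beta> y) \<or> (conn H x \<beta> \<and> conn H \<alpha> y)"
  using assms unfolding conn_def[of "insert {\<alpha>,\<beta>} H"]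
proof (induction rule: rtranclp_induct)
  case base then show ?case by simp
next
  case (step y z)
  have ad: "adj H y z \<or> {y,z} = {\<alpha>,\<beta>}" using step(2) by (auto simp: adj_def)
  show ?case
  proof (cases "adj H y z")
    case True
    then have c: "conn H y z" by (simp add: conn_def r_into_rtranclp)
    show ?thesis using step(3) conn_trans[OF _ c] by blast
  next
    case False
    then have yz: "(y = \<alpha> \<and> z = \<beta>) \<or> (y = \<beta> \<and> z = \<alpha>)" using ad by (auto simp: doubleton_eq_iff)
    then show ?thesis
    proof
      assume a: "y = \<alpha> \<and> z = \<beta>"
      show ?thesis using step(3) a conn_sym[of H \<beta> \<alpha>] conn_trans[of H x \<beta> \<alpha>] by auto
    next
      assume a: "y = \<beta> \<and> z = \<alpha>"
      show ?thesis using step(3) a conn_sym[of H \<alpha> \<beta>] conn_trans[of H x \<alpha> \<beta>] by auto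
    qed
  qed
qed



definition eform :: "nat set set \<Rightarrow> bool" where
  "eform E \<longleftrightarrow> (\<forall>e\<in>E. \<exists>u v. e = {u,v} \<and> u \<noteq> v)"

definition resolved_by :: "nat set set \<Rightarrow> nat set \<Rightarrow> nat \<Rightarrow> nat \<Rightarrow> nat \<Rightarrow> nat \<Rightarrow> bool" where
  "resolved_by E e P Q R S \<longleftrightarrow> e \<in> E \<and> conn (E - {e}) P Q \<and> conn (E - {e}) R S \<and> \<not> conn (E - {e}) P R"

lemma four_point:
  assumes ef: "eform E" and r1: "resolved_by E e P Q R S" and r2: "resolved_by E e' P R Q S"
  shows False
proof -
  have ne: "e \<noteq> e'" using r1 r2 unfolding resolved_by_def by auto
  obtain \<alpha> \<beta> where e: "e = {\<alpha>,\<beta>}" using ef r1 unfolding eform_def resolved_by_def by blast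
  obtain \<gamma> \<delta> where e': "e' = {\<gamma>,\<delta>}" using ef r2 unfolding eform_def resolved_by_def by blast
  define H where "H = E - {e, e'}"
  have E1: "E - {e} = insert e' H" using ne r2 unfolding H_def resolved_by_def by auto
  have E2: "E - {e'} = insert e H" using ne r1 unfolding H_def resolved_by_def by auto
  have sub1: "H \<subseteq> E - {e}" and sub2: "H \<subseteq> E - {e'}" unfolding H_def by auto
  have nPR: "\<not> conn (insert e' H) P R" using r1 E1 unfolding resolved_by_def by simp
  have nPQ: "\<not> conn (insert e H) P Q" using r2 E2 unfolding resolved_by_def by simp
  have nPRH: "\<not> conn H P R" using nPR conn_mono[of H P R "insert e' H"] by auto
  have nPQH: "\<not> conn H P Q" using nPQ conn_mono[of H P Q "insert e H"] by auto
  have c1: "conn (insert {\<gamma>,\<delta>} H) P Q" using r1 E1 e' unfolding resolved_by_def by simp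
  have c2: "conn (insert {\<gamma>,\<delta>} H) R S" using r1 E1 e' unfolding resolved_by_def by simp
  have c3: "conn (insert {\<alpha>,\<beta>} H) P R" using r2 E2 e unfolding resolved_by_def by simp
  have c4: "conn (insert {\<alpha>,\<beta>} H) Q S" using r2 E2 e unfolding resolved_by_def by simp
  have lift1: "conn (insert {\<alpha>,\<beta>} H) x y" if "conn H x \<alpha>" "conn H \<beta> y" for x y
    using conn_trans[OF conn_trans[OF conn_mono[OF that(1)] conn_edge] conn_mono[OF that(2)]]
    by (metis insertI1 subset_insertI)
  have lift1': "conn (insert {\<alpha>,\<beta>} H) x y" if "conn H x \<beta>" "conn H \<alpha> y" for x y
    using lift1[of x y] that by (metis conn_sym lift1)
  have lift2: "conn (insert {\<gamma>,\<delta>} H) x y" if "conn H x \<gamma>" "conn H \<delta> y" for x y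
    using conn_trans[OF conn_trans[OF conn_mono[OF that(1)] conn_edge] conn_mono[OF that(2)]]
    by (metis insertI1 subset_insertI)
  have lift2': "conn (insert {\<gamma>,\<delta>} H) x y" if "conn H x \<delta>" "conn H \<gamma> y" for x y
    using that by (metis conn_sym lift2)
  note d1 = conn_add_edge[OF c1] and d2 = conn_add_edge[OF c2]
    and d3 = conn_add_edge[OF c3] and d4 = conn_add_edge[OF c4]
  note nPR' = nPR[unfolded e'] and nPQ' = nPQ[unfolded e]
  show False
    using d1 d2 d3 d4 nPRH nPQH nPR' nPQ' lift1 lift1' lift2 lift2' conn_sym conn_trans
    by meson
qed



definition cg :: "nat \<Rightarrow> nat \<Rightarrow> nat \<Rightarrow> nat" where
  "cg u v = (\<lambda>w. if w = v then u else w)"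

definition cE :: "nat set set \<Rightarrow> nat \<Rightarrow> nat \<Rightarrow> nat set set" where
  "cE G u v = (\<lambda>e. cg u v ` e) ` (G - {{u,v}})"

lemma contract_simps:
  "verts (contract F u v) = verts F - {v}"
  "edges (contract F u v) = cE (edges F) u v"
  "lab (contract F u v) = cg u v \<circ> lab F"
  unfolding contract_def cE_def cg_def Let_def by auto

lemma cg_pair: "cg u v ` {y,z} = {cg u v y, cg u v z}" by auto

lemma conn_push:
  assumes "conn G p q"
  shows "conn (cE G u v) (cg u v p) (cg u v q)"
  using assms
proof (rule conn_map)
  fix y z assume "adj G y z"
  then have "{y,z} \<in> G" by (simp add: adj_def)
  show "adj (cE G u v) (cg u v y) (cg u v z) \<or> cg u v y = cg u v z"
  proof (cases "{y,z} = {u,v}")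
    case True
    then have "y \<in> {u,v}" "z \<in> {u,v}" by auto
    then have "cg u v y = u" "cg u v z = u" unfolding cg_def by auto
    then show ?thesis by simp
  next
    case False
    then have "cg u v ` {y,z} \<in> cE G u v" using \<open>{y,z} \<in> G\<close> unfolding cE_def by blast
    then show ?thesis unfolding adj_def by (simp add: cg_pair)
  qed
qed

lemma cg_same:
  assumes "cg u v a = cg u v b" "{u,v} \<in> G"
  shows "conn G a b"
proof -
  have "a = b \<or> (a = u \<and> b = v) \<or> (a = v \<and> b = u)" using assms(1) by (auto simp: cg_def split: if_splits)
  then show ?thesis using conn_edge[OF assms(2)] conn_sym by auto
qed

lemma conn_pull:
  assumes "conn (cE G u v) s t" "{u,v} \<in> G" "eform G"
  shows "\<And>s' t'. cg u v s' = s \<Longrightarrow> cg u v t' = t \<Longrightarrow> conn G s' t'"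
  using assms(1) unfolding conn_def[of "cE G u v"]
proof (induction rule: rtranclp_induct)
  case base then show ?case using cg_same[OF _ assms(2)] by metis
next
  case (step y z)
  from step(2) obtain e where e: "e \<in> G" "e \<noteq> {u,v}" "cg u v ` e = {y,z}" unfolding adj_def cE_def by auto
  obtain c d where cd: "e = {c,d}" using e(1) assms(3) unfolding eform_def by blast
  have "(cg u v c = y \<and> cg u v d = z) \<or> (cg u v c = z \<and> cg u v d = y)"
    using e(3) cd by (auto simp: doubleton_eq_iff)
  then show ?case
  proof
    assume h: "cg u v c = y \<and> cg u v d = z"
    have "conn G s' c" using step(3)[of s' c] step(4) h by auto
    moreover have "conn G c d" using conn_edge e(1) cd by simp
    moreover have "conn G d t'" using cg_same[OF _ assms(2)] h step(5) by metis
    ultimately show ?thesis using conn_trans by blast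
  next
    assume h: "cg u v c = z \<and> cg u v d = y"
    have "conn G s' d" using step(3)[of s' d] step(4) h by auto
    moreover have "conn G d c" using conn_edge e(1) cd by (simp add: insert_commute)
    moreover have "conn G c t'" using cg_same[OF _ assms(2)] h step(5) by metis
    ultimately show ?thesis using conn_trans by blast
  qed
qed

definition trifree :: "nat set set \<Rightarrow> nat \<Rightarrow> nat \<Rightarrow> bool" where
  "trifree G u v \<longleftrightarrow> \<not> (\<exists>z. {u,z} \<in> G \<and> {v,z} \<in> G)"

lemma cg_edge_cases:
  assumes "eform G" "e \<in> G" "e \<noteq> {u,v}" "u \<noteq> v"
  shows "(v \<notin> e \<and> cg u v ` e = e) \<or> (\<exists>z. z \<noteq> u \<and> z \<noteq> v \<and> e = {v,z} \<and> cg u v ` e = {u,z})"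
proof -
  obtain a b where ab: "e = {a,b}" "a \<noteq> b" using assms(1,2) unfolding eform_def by blast
  show ?thesis
  proof (cases "v \<in> e")
    case False
    then have "cg u v ` e = e" unfolding cg_def by (auto simp: image_iff)
    then show ?thesis using False by auto
  next
    case True
    then obtain z where z: "e = {v,z}" using ab by auto
    have "z \<noteq> v" using z ab by auto
    moreover have "z \<noteq> u" using z assms(3) by auto
    moreover have "cg u v ` e = {u,z}" using z \<open>z \<noteq> v\<close> unfolding cg_def by auto
    ultimately show ?thesis using z by auto
  qed
qed

lemma cg_uniq:
  assumes "eform G" "trifree G u v" "u \<noteq> v" "e1 \<in> G" "e2 \<in> G" "e1 \<noteq> {u,v}" "e2 \<noteq> {u,v}"
    "cg u v ` e1 = cg u v ` e2"
  shows "e1 = e2"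
proof -
  note c1 = cg_edge_cases[OF assms(1,4,6,3)] and c2 = cg_edge_cases[OF assms(1,5,7,3)]
  have t: "\<not> ({u,z} \<in> G \<and> {v,z} \<in> G)" for z using assms(2) unfolding trifree_def by blast
  show ?thesis
  proof (cases "v \<in> e1")
    case False
    show ?thesis
    proof (cases "v \<in> e2")
      case False
      then show ?thesis using c1 c2 \<open>v \<notin> e1\<close> assms(8) by auto
    next
      case True
      then obtain z where "e2 = {v,z}" "cg u v ` e2 = {u,z}" using c2 by auto
      then show ?thesis using c1 \<open>v \<notin> e1\<close> assms(8) assms(4,5) t[of z] by auto
    qed
  next
    case True
    then obtain z where z: "z \<noteq> u" "e1 = {v,z}" "cg u v ` e1 = {u,z}" using c1 by auto
    show ?thesis
    proof (cases "v \<in> e2")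
      case False
      then show ?thesis using c2 z assms(8) assms(4,5) t[of z] by auto
    next
      case True
      then obtain z' where z': "z' \<noteq> u" "e2 = {v,z'}" "cg u v ` e2 = {u,z'}" using c2 by auto
      then have "z = z'" using z assms(8) by (auto simp: doubleton_eq_iff)
      then show ?thesis using z z' by simp
    qed
  qed
qed

lemma cE_minus:
  assumes "eform G" "trifree G u v" "u \<noteq> v" "e0 \<in> G" "e0 \<noteq> {u,v}"
  shows "cE G u v - {cg u v ` e0} = cE (G - {e0}) u v"
  using cg_uniq[OF assms(1,2,3) _ assms(4) _ assms(5)] assms(4,5)
  unfolding cE_def by auto

lemma contract_back:
  assumes ef: "eform T" and uv: "{u,v} \<in> T" "u \<noteq> v" and tf: "trifree T u v"
    and r: "resolved_by (cE T u v) e'' (cg u v P) (cg u v Q) (cg u v R) (cg u v S)"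
  shows "\<exists>e'. e' \<noteq> {u,v} \<and> resolved_by T e' P Q R S"
proof -
  from r obtain e0 where e0: "e0 \<in> T" "e0 \<noteq> {u,v}" "e'' = cg u v ` e0"
    unfolding resolved_by_def cE_def by auto
  have eq: "cE T u v - {e''} = cE (T - {e0}) u v" using cE_minus[OF ef tf uv(2) e0(1,2)] e0(3) by simp
  have ef': "eform (T - {e0})" using ef unfolding eform_def by auto
  have uv': "{u,v} \<in> T - {e0}" using uv e0 by auto
  have "conn (T - {e0}) P Q" using r eq conn_pull[OF _ uv' ef'] unfolding resolved_by_def by auto
  moreover have "conn (T - {e0}) R S" using r eq conn_pull[OF _ uv' ef'] unfolding resolved_by_def by auto
  moreover have "\<not> conn (T - {e0}) P R" using r eq conn_push[of "T - {e0}" P R u v] unfolding resolved_by_def by auto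
  ultimately show ?thesis using e0 unfolding resolved_by_def by auto
qed

lemma contract_survive:
  assumes ef: "eform T" and uv: "{u,v} \<in> T" "u \<noteq> v" and tf: "trifree T u v"
    and r: "resolved_by T e0 P Q R S" and ne: "e0 \<noteq> {u,v}"
  shows "resolved_by (cE T u v) (cg u v ` e0) (cg u v P) (cg u v Q) (cg u v R) (cg u v S)"
proof -
  have e0: "e0 \<in> T" using r unfolding resolved_by_def by auto
  have eq: "cE T u v - {cg u v ` e0} = cE (T - {e0}) u v" using cE_minus[OF ef tf uv(2) e0 ne] by simp
  have ef': "eform (T - {e0})" using ef unfolding eform_def by auto
  have uv': "{u,v} \<in> T - {e0}" using uv e0 ne by auto
  have "cg u v ` e0 \<in> cE T u v" using e0 ne unfolding cE_def by auto
  moreover have "conn (cE T u v - {cg u v ` e0}) (cg u v P) (cg u v Q)"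
    using r eq conn_push unfolding resolved_by_def by auto
  moreover have "conn (cE T u v - {cg u v ` e0}) (cg u v R) (cg u v S)"
    using r eq conn_push unfolding resolved_by_def by auto
  moreover have "\<not> conn (cE T u v - {cg u v ` e0}) (cg u v P) (cg u v R)"
    using r eq conn_pull[OF _ uv' ef', of "cg u v P" "cg u v R" P R] unfolding resolved_by_def by auto
  ultimately show ?thesis unfolding resolved_by_def by auto
qed



definition qres :: "xforest \<Rightarrow> nat \<Rightarrow> nat \<Rightarrow> nat \<Rightarrow> nat \<Rightarrow> bool" where
  "qres C p q r s \<longleftrightarrow> (\<exists>e. resolved_by (edges C) e (lab C p) (lab C q) (lab C r) (lab C s))"

lemma xf_E: "is_xforest X F \<Longrightarrow> \<forall>e\<in>edges F. \<exists>u v. e = {u,v} \<and> u \<noteq> v \<and> u \<in> verts F \<and> v \<in> verts F"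
  by (simp add: is_xforest_def)
lemma xf_lab: "is_xforest X F \<Longrightarrow> lab F ` X \<subseteq> verts F"
  by (simp add: is_xforest_def)
lemma xf_acyc: "is_xforest X F \<Longrightarrow> \<forall>e\<in>edges F. \<forall>u v. e = {u, v} \<longrightarrow> \<not> conn (edges F - {e}) u v"
  by (simp add: is_xforest_def)
lemma xf_fin: "is_xforest X F \<Longrightarrow> finite (verts F)"
  by (simp add: is_xforest_def)
lemma xf_deg: "is_xforest X F \<Longrightarrow> \<forall>v\<in>verts F. \<not> labeled X F v \<longrightarrow> 3 \<le> deg (edges F) v"
  by (simp add: is_xforest_def)

lemma xforest_eform: "is_xforest X F \<Longrightarrow> eform (edges F)"
  unfolding eform_def using xf_E by fast

lemma xforest_sub: "is_xforest X F \<Longrightarrow> e \<in> edges F \<Longrightarrow> e \<subseteq> verts F"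
  using xf_E by fast

lemma xforest_lab: "is_xforest X F \<Longrightarrow> x \<in> X \<Longrightarrow> lab F x \<in> verts F"
  using xf_lab by fast

lemma iso_conn_eq:
  assumes inj: "inj_on f V" and sub: "\<And>e. e \<in> E \<Longrightarrow> e \<subseteq> V" and ef: "eform E"
    and P: "P \<in> V" and Q: "Q \<in> V"
  shows "conn ((\<lambda>e. f ` e) ` E) (f P) (f Q) \<longleftrightarrow> conn E P Q"
proof
  assume c: "conn ((\<lambda>e. f ` e) ` E) (f P) (f Q)"
  define h where "h = inv_into V f"
  have hf: "h (f y) = y" if "y \<in> V" for y using inj that unfolding h_def by simp
  have "conn E (h (f P)) (h (f Q))"
  proof (rule conn_map[OF c])
    fix y z assume "adj ((\<lambda>e. f ` e) ` E) y z"
    then obtain e1 where e1: "e1 \<in> E" "{y,z} = f ` e1" unfolding adj_def by auto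
    obtain c d where cd: "e1 = {c,d}" using ef e1(1) unfolding eform_def by blast
    have cdV: "c \<in> V" "d \<in> V" using sub[OF e1(1)] cd by auto
    have "{y,z} = {f c, f d}" using e1 cd by simp
    then have "(y = f c \<and> z = f d) \<or> (y = f d \<and> z = f c)" by (auto simp: doubleton_eq_iff)
    then have "{h y, h z} = {c,d}" using hf cdV by auto
    then show "adj E (h y) (h z) \<or> h y = h z" using e1(1) cd unfolding adj_def by simp
  qed
  then show "conn E P Q" using hf P Q by simp
next
  assume "conn E P Q"
  then show "conn ((\<lambda>e. f ` e) ` E) (f P) (f Q)"
  proof (rule conn_map)
    fix y z assume "adj E y z"
    then show "adj ((\<lambda>e. f ` e) ` E) (f y) (f z) \<or> f y = f z" unfolding adj_def
      by (metis image_empty image_eqI image_insert)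
  qed
qed

lemma img_minus:
  assumes inj: "inj_on f V" and sub: "\<And>e. e \<in> E \<Longrightarrow> e \<subseteq> V" and e: "e \<in> E"
  shows "(\<lambda>e. f ` e) ` E - {f ` e} = (\<lambda>e. f ` e) ` (E - {e})"
proof -
  have "f ` e1 = f ` e \<Longrightarrow> e1 \<in> E \<Longrightarrow> e1 = e" for e1
    using inj_on_image_eq_iff[OF inj sub sub[OF e]] by blast
  then show ?thesis using e by auto
qed

lemma iso_resolved_fwd:
  assumes inj: "inj_on f V" and sub: "\<And>e. e \<in> E \<Longrightarrow> e \<subseteq> V" and ef: "eform E"
    and V: "P \<in> V" "Q \<in> V" "R \<in> V" "S \<in> V" and True: "e \<in> E"
  shows "resolved_by E e P Q R S \<longleftrightarrow> resolved_by ((\<lambda>e. f ` e) ` E) (f ` e) (f P) (f Q) (f R) (f S)"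
proof -
  have sub': "\<And>e'. e' \<in> E - {e} \<Longrightarrow> e' \<subseteq> V" using sub by auto
  have ef': "eform (E - {e})" using ef unfolding eform_def by auto
  have eq: "(\<lambda>e. f ` e) ` E - {f ` e} = (\<lambda>e. f ` e) ` (E - {e})"
    by (rule img_minus[OF inj]) (use sub True in auto)
  have ce: "conn ((\<lambda>e. f ` e) ` (E - {e})) (f A) (f B) \<longleftrightarrow> conn (E - {e}) A B"
    if "A \<in> V" "B \<in> V" for A B
    by (rule iso_conn_eq[OF inj sub' ef' that])
  have m: "f ` e \<in> (\<lambda>e. f ` e) ` E" using True by auto
  show ?thesis unfolding resolved_by_def eq using ce[OF V(1) V(2)] ce[OF V(3) V(4)] ce[OF V(1) V(3)] m True
    by blast
qed

lemma iso_qres: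
  assumes F: "is_xforest X F" and iso: "iso X F G" and X: "p \<in> X" "q \<in> X" "r \<in> X" "s \<in> X"
  shows "qres F p q r s \<longleftrightarrow> qres G p q r s"
proof -
  obtain f where f: "bij_betw f (verts F) (verts G)" "edges G = (\<lambda>e. f ` e) ` edges F"
    "\<And>x. x \<in> X \<Longrightarrow> lab G x = f (lab F x)"
    using iso unfolding iso_def by metis
  have inj: "inj_on f (verts F)" using f(1) bij_betw_def by blast
  note sub = xforest_sub[OF F] and ef = xforest_eform[OF F]
  note L = xforest_lab[OF F]
  have fw: "resolved_by (edges F) e (lab F p) (lab F q) (lab F r) (lab F s) \<longleftrightarrow>
     resolved_by ((\<lambda>e. f ` e) ` edges F) (f ` e) (f (lab F p)) (f (lab F q)) (f (lab F r)) (f (lab F s))"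
    if "e \<in> edges F" for e
    by (rule iso_resolved_fwd[OF inj _ ef L[OF X(1)] L[OF X(2)] L[OF X(3)] L[OF X(4)] that])
       (use sub in auto)
  have lg: "lab G p = f (lab F p)" "lab G q = f (lab F q)" "lab G r = f (lab F r)" "lab G s = f (lab F s)"
    using f(3) X by auto
  show ?thesis
  proof
    assume "qres F p q r s"
    then obtain e where r: "resolved_by (edges F) e (lab F p) (lab F q) (lab F r) (lab F s)"
      unfolding qres_def by blast
    then have e: "e \<in> edges F" unfolding resolved_by_def by simp
    have "resolved_by ((\<lambda>e. f ` e) ` edges F) (f ` e) (f (lab F p)) (f (lab F q)) (f (lab F r)) (f (lab F s))"
      using fw[OF e] r by blast
    then have "resolved_by (edges G) (f ` e) (lab G p) (lab G q) (lab G r) (lab G s)"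
      unfolding lg f(2) .
    then show "qres G p q r s" unfolding qres_def by blast
  next
    assume "qres G p q r s"
    then obtain e' where r: "resolved_by (edges G) e' (lab G p) (lab G q) (lab G r) (lab G s)"
      unfolding qres_def by blast
    then obtain e where e: "e \<in> edges F" "e' = f ` e" unfolding resolved_by_def f(2) by auto
    have "resolved_by ((\<lambda>e. f ` e) ` edges F) (f ` e) (f (lab F p)) (f (lab F q)) (f (lab F r)) (f (lab F s))"
      using r unfolding lg f(2) e(2) .
    then have "resolved_by (edges F) e (lab F p) (lab F q) (lab F r) (lab F s)"
      using fw[OF e(1)] by blast
    then show "qres F p q r s" unfolding qres_def by blast
  qed
qed

lemma iso_sym:
  assumes F: "is_xforest X F" and iso: "iso X F G"
  shows "iso X G F"
proof -
  obtain f where f: "bij_betw f (verts F) (verts G)" "edges G = (\<lambda>e. f ` e) ` edges F"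
    "\<And>x. x \<in> X \<Longrightarrow> lab G x = f (lab F x)"
    using iso unfolding iso_def by metis
  define h where "h = inv_into (verts F) f"
  have b: "bij_betw h (verts G) (verts F)" unfolding h_def by (rule bij_betw_inv_into[OF f(1)])
  have inj: "inj_on f (verts F)" using f(1) bij_betw_def by blast
  have hf: "h (f y) = y" if "y \<in> verts F" for y using inj that unfolding h_def by simp
  have hfe: "h ` (f ` e) = e" if "e \<in> edges F" for e
  proof -
    have "e \<subseteq> verts F" using xforest_sub[OF F that] .
    then have "h ` f ` e = (\<lambda>y. h (f y)) ` e" by (simp add: image_image)
    also have "\<dots> = e" using \<open>e \<subseteq> verts F\<close> hf by (simp add: subset_iff)
    finally show ?thesis .
  qed
  have ee: "(\<lambda>e. h ` e) ` edges G = edges F"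
  proof -
    have "(\<lambda>e. h ` e) ` edges G = (\<lambda>e. h ` (f ` e)) ` edges F" unfolding f(2) image_image ..
    also have "\<dots> = (\<lambda>e. e) ` edges F" using hfe by (intro image_cong) auto
    finally show ?thesis by simp
  qed
  have ll: "lab F x = h (lab G x)" if "x \<in> X" for x using f(3)[OF that] hf xforest_lab[OF F that] by simp
  show ?thesis unfolding iso_def using b ee ll by auto
qed



lemma conn_verts:
  assumes "conn E a b" "a \<in> V" "\<And>e. e \<in> E \<Longrightarrow> e \<subseteq> V"
  shows "b \<in> V"
  using assms(1) unfolding conn_def
proof (induction rule: rtranclp_induct)
  case base then show ?case using assms(2) .
next
  case (step y z) then show ?case using assms(3) unfolding adj_def by blast
qed

lemma xf_acyc': "is_xforest X F \<Longrightarrow> {u,v} \<in> edges F \<Longrightarrow> \<not> conn (edges F - {{u,v}}) u v"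
  using xf_acyc by blast

lemma xf_finE: "is_xforest X F \<Longrightarrow> finite (edges F)"
proof -
  assume F: "is_xforest X F"
  have "edges F \<subseteq> Pow (verts F)" using xforest_sub[OF F] by blast
  then show ?thesis using xf_fin[OF F] finite_subset by blast
qed

lemma leaf_exists:
  assumes F: "is_xforest X T"
  shows "{s,t} \<in> edges T \<Longrightarrow> s \<noteq> t \<Longrightarrow> \<exists>y\<in>X. conn (edges T - {{s,t}}) t (lab T y)"
proof (induction "card {z. conn (edges T - {{s,t}}) t z}" arbitrary: s t rule: less_induct)
  case less
  define E where "E = edges T"
  have stE: "{s,t} \<in> E" using less E_def by simp
  show ?case
  proof (cases "labeled X T t")
    case True
    then obtain y where "y \<in> X" "lab T y = t" unfolding labeled_def by auto
    then show ?thesis using conn_refl by metis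
  next
    case False
    have tV: "t \<in> verts T" using xforest_sub[OF F less(2)] by auto
    have d: "3 \<le> deg E t" using xf_deg[OF F] tV False E_def by blast
    have fE: "finite E" using xf_finE[OF F] E_def by simp
    have "\<not> {e\<in>E. t \<in> e} \<subseteq> {{s,t}}"
    proof
      assume "{e\<in>E. t \<in> e} \<subseteq> {{s,t}}"
      then have "card {e\<in>E. t \<in> e} \<le> card {{s,t}}" by (intro card_mono) auto
      then show False using d unfolding deg_def by simp
    qed
    then obtain e where e: "e \<in> E" "t \<in> e" "e \<noteq> {s,t}" by blast
    obtain a b where ab: "e = {a,b}" "a \<noteq> b" using xforest_eform[OF F] e(1) E_def unfolding eform_def by blast
    obtain t' where t': "e = {t,t'}" "t' \<noteq> t" using ab e(2) by auto
    have t's: "t' \<noteq> s" using t' e(3) by (auto simp: insert_commute)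
    have ac: "\<not> conn (E - {{t,t'}}) t t'" using xf_acyc'[OF F] e(1) t' E_def by simp
    have ac': "\<not> conn (E - {{t,t'}}) t' t" using ac conn_sym by blast
    define H where "H = E - {{t,t'}, {s,t}}"
    have neq: "{s,t} \<noteq> {t,t'}" using t's less(3) by (auto simp: doubleton_eq_iff)
    have HE: "E - {{t,t'}} = insert {s,t} H" using H_def stE neq by auto
    have sub: "{z. conn (E - {{t,t'}}) t' z} \<subseteq> {z. conn (E - {{s,t}}) t z}"
    proof
      fix z assume "z \<in> {z. conn (E - {{t,t'}}) t' z}"
      then have "conn (insert {s,t} H) t' z" using HE by simp
      from conn_add_edge[OF this]
      show "z \<in> {z. conn (E - {{s,t}}) t z}"
      proof (elim disjE conjE)
        assume c: "conn H t' z"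
        have c1: "conn (E - {{s,t}}) t' z" by (rule conn_mono[OF c]) (auto simp: H_def)
        have "{t,t'} \<in> E - {{s,t}}" using e(1) t' neq by auto
        then have c2: "conn (E - {{s,t}}) t t'" by (rule conn_edge)
        show ?thesis using conn_trans[OF c2 c1] by simp
      next
        assume c: "conn H t' s"
        have c1: "conn (E - {{t,t'}}) t' s" by (rule conn_mono[OF c]) (auto simp: H_def)
        have "{s,t} \<in> E - {{t,t'}}" using stE neq by auto
        then have c2: "conn (E - {{t,t'}}) s t" by (rule conn_edge)
        show ?thesis using conn_trans[OF c1 c2] ac' by simp
      next
        assume c: "conn H t' t"
        have "conn (E - {{t,t'}}) t' t" by (rule conn_mono[OF c]) (auto simp: H_def)
        then show ?thesis using ac' by blast
      qed
    qed
    have tin: "t \<in> {z. conn (E - {{s,t}}) t z}" by simp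
    have tout: "t \<notin> {z. conn (E - {{t,t'}}) t' z}" using ac' by simp
    have fin: "finite {z. conn (E - {{s,t}}) t z}"
    proof (rule finite_subset[OF _ xf_fin[OF F]])
      show "{z. conn (E - {{s,t}}) t z} \<subseteq> verts T"
        using conn_verts[OF _ tV, of "E - {{s,t}}"] xforest_sub[OF F] E_def by blast
    qed
    have "card {z. conn (edges T - {{t,t'}}) t' z} < card {z. conn (edges T - {{s,t}}) t z}"
      using psubset_card_mono[OF fin] sub tin tout E_def by blast
    moreover have "{t,t'} \<in> edges T" using e(1) t' E_def by simp
    ultimately obtain y where y: "y \<in> X" "conn (edges T - {{t,t'}}) t' (lab T y)"
      using less(1)[of t t'] t'(2) by blast
    then show ?thesis using sub E_def by auto
  qed
qed


lemma bin_xf: "binary_xtree X C \<Longrightarrow> is_xforest X C"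
  unfolding binary_xtree_def is_xtree_def by simp

lemma bin_vert: "binary_xtree X C \<Longrightarrow> v \<in> verts C \<Longrightarrow>
   (labeled X C v \<and> deg (edges C) v = 1) \<or> (\<not> labeled X C v \<and> deg (edges C) v = 3)"
  unfolding binary_xtree_def by blast

lemma edge_vert: "is_xforest X C \<Longrightarrow> e \<in> edges C \<Longrightarrow> v \<in> e \<Longrightarrow> v \<in> verts C"
  using xforest_sub by blast

lemma deg_card: "finite E \<Longrightarrow> S \<subseteq> E \<Longrightarrow> (\<And>e. e \<in> S \<Longrightarrow> v \<in> e) \<Longrightarrow> card S \<le> deg E v"
  unfolding deg_def by (intro card_mono) auto

lemma bin_deg_le3: "binary_xtree X C \<Longrightarrow> e \<in> edges C \<Longrightarrow> v \<in> e \<Longrightarrow> deg (edges C) v \<le> 3"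
  using bin_vert[of X C v] edge_vert[OF bin_xf] by fastforce

lemma four_edges:
  assumes B: "binary_xtree X C" and E: "e1 \<in> edges C" "e2 \<in> edges C" "e3 \<in> edges C" "e4 \<in> edges C"
    and d: "e1 \<noteq> e2" "e1 \<noteq> e3" "e1 \<noteq> e4" "e2 \<noteq> e3" "e2 \<noteq> e4" "e3 \<noteq> e4"
    and v: "v \<in> e1" "v \<in> e2" "v \<in> e3" "v \<in> e4"
  shows False
proof -
  have "card {e1,e2,e3,e4} \<le> deg (edges C) v"
    using deg_card[OF xf_finE[OF bin_xf[OF B]], of "{e1,e2,e3,e4}" v] E v by auto
  moreover have "card {e1,e2,e3,e4} = 4" using d by auto
  moreover have "deg (edges C) v \<le> 3" using bin_deg_le3[OF B E(1) v(1)] .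
  ultimately show False by simp
qed

lemma deg3_only:
  assumes B: "binary_xtree X C" and E: "e1 \<in> edges C" "e2 \<in> edges C" "e3 \<in> edges C"
    and d: "e1 \<noteq> e2" "e1 \<noteq> e3" "e2 \<noteq> e3"
    and v: "v \<in> e1" "v \<in> e2" "v \<in> e3" and e: "e \<in> edges C" "v \<in> e"
  shows "e = e1 \<or> e = e2 \<or> e = e3"
  using four_edges[OF B E e(1) _ _ _ _ _ _ v e(2)] d by blast

lemma two_unlab:
  assumes B: "binary_xtree X C" and E: "e1 \<in> edges C" "e2 \<in> edges C" and d: "e1 \<noteq> e2"
    and v: "v \<in> e1" "v \<in> e2"
  shows "\<not> labeled X C v" "deg (edges C) v = 3"
proof -
  have "card {e1,e2} \<le> deg (edges C) v"
    using deg_card[OF xf_finE[OF bin_xf[OF B]], of "{e1,e2}" v] E v by auto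
  then have "2 \<le> deg (edges C) v" using d by simp
  then show "\<not> labeled X C v" "deg (edges C) v = 3"
    using bin_vert[OF B edge_vert[OF bin_xf[OF B] E(1) v(1)]] by auto
qed

lemma lab_one:
  assumes B: "binary_xtree X C" and l: "labeled X C v" and E: "e1 \<in> edges C" "e2 \<in> edges C"
    and v: "v \<in> e1" "v \<in> e2"
  shows "e1 = e2"
  using two_unlab[OF B E _ v] l by blast

lemma xf_trifree:
  assumes F: "is_xforest X C" and uv: "{u,v} \<in> edges C" "u \<noteq> v"
  shows "trifree (edges C) u v"
  unfolding trifree_def
proof
  assume "\<exists>z. {u,z} \<in> edges C \<and> {v,z} \<in> edges C"
  then obtain z where z: "{u,z} \<in> edges C" "{v,z} \<in> edges C" by blast
  have ef: "eform (edges C)" using xforest_eform[OF F] .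
  have zu: "z \<noteq> u" using ef z(1) unfolding eform_def by (metis doubleton_eq_iff insert_absorb2)
  have zv: "z \<noteq> v" using ef z(2) unfolding eform_def by (metis doubleton_eq_iff insert_absorb2)
  have a: "{u,v} \<in> edges C - {{u,z}}" using uv zv by (auto simp: doubleton_eq_iff)
  have b: "{v,z} \<in> edges C - {{u,z}}" using z uv(2) by (auto simp: doubleton_eq_iff)
  have "conn (edges C - {{u,z}}) u z" using conn_trans[OF conn_edge[OF a] conn_edge[OF b]] .
  then show False using xf_acyc'[OF F z(1)] by simp
qed

lemma bin_acyc: "binary_xtree X C \<Longrightarrow> {u,v} \<in> edges C \<Longrightarrow> \<not> conn (edges C - {{u,v}}) u v"
  using xf_acyc'[OF bin_xf] by blast

lemma no_safe_del:
  assumes B: "binary_xtree X C" and X: "3 \<le> card X" "finite X" and uv: "{u,v} \<in> edges C" "u \<noteq> v"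
    and sd: "safe_del X C u v"
  shows False
proof -
  have F: "is_xforest X C" using bin_xf[OF B] .
  have lu: "labeled X C u" using sd bin_deg_le3[OF B uv(1)] unfolding safe_del_def by fastforce
  have lv: "labeled X C v" using sd bin_deg_le3[OF B uv(1)] unfolding safe_del_def by fastforce
  have uV: "u \<in> verts C" using edge_vert[OF F uv(1)] by simp
  have cl: "z \<in> {u,v}" if "conn (edges C) u z" for z
    using that unfolding conn_def
  proof (induction rule: rtranclp_induct)
    case base then show ?case by simp
  next
    case (step y z)
    have yz: "{y,z} \<in> edges C" using step(2) unfolding adj_def .
    have "{y,z} = {u,v}"
    proof (cases "y = u")
      case True then show ?thesis using lab_one[OF B lu yz uv(1)] by simp
    next
      case False then have "y = v" using step(3) by simp
      then show ?thesis using lab_one[OF B lv yz uv(1)] by simp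
    qed
    then show ?case by (auto simp: doubleton_eq_iff)
  qed
  have allc: "\<forall>a\<in>verts C. \<forall>b\<in>verts C. conn (edges C) a b"
    using B unfolding binary_xtree_def is_xtree_def by simp
  have "verts C \<subseteq> {u,v}" using allc uV cl by blast
  then have "lab C ` X \<subseteq> {u,v}" using xf_lab[OF F] by blast
  moreover have "inj_on (lab C) X" using B unfolding binary_xtree_def by simp
  ultimately have "card X \<le> card {u,v}" by (metis card_inj_on_le finite.emptyI finite.insertI)
  moreover have "card {u,v} \<le> 2" by (simp add: card_insert_if)
  ultimately show False using X(1) by simp
qed

lemma bin_cover:
  assumes B: "binary_xtree X C" and X: "3 \<le> card X" "finite X" and c: "covers X C F"
  shows "\<exists>u v. {u,v} \<in> edges C \<and> u \<noteq> v \<and> iso X F (contract C u v)"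
  using c no_safe_del[OF B X] unfolding covers_def by blast



lemma cE_pre:
  assumes "{s,t} \<in> cE G u v" "eform G"
  shows "\<exists>s' t'. {s',t'} \<in> G \<and> {s',t'} \<noteq> {u,v} \<and> cg u v s' = s \<and> cg u v t' = t"
proof -
  obtain e where e: "e \<in> G" "e \<noteq> {u,v}" "cg u v ` e = {s,t}" using assms(1) unfolding cE_def by auto
  obtain c d where cd: "e = {c,d}" using assms(2) e(1) unfolding eform_def by blast
  have "{cg u v c, cg u v d} = {s,t}" using e(3) cd by simp
  then have "(cg u v c = s \<and> cg u v d = t) \<or> (cg u v c = t \<and> cg u v d = s)" by (auto simp: doubleton_eq_iff)
  then show ?thesis using e cd by (metis insert_commute)
qed

lemma cg_other: "s \<noteq> u \<Longrightarrow> cg u v s' = s \<Longrightarrow> s' = s"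
  unfolding cg_def by (auto split: if_splits)

lemma cg_u: "cg u v s' = u \<Longrightarrow> s' = u \<or> s' = v"
  unfolding cg_def by (auto split: if_splits)

lemma cg_id: "s \<noteq> v \<Longrightarrow> cg u v s = s"
  unfolding cg_def by simp

locale crit =
  fixes X :: "nat set" and Ci C' :: xforest and x w a b \<alpha>1 \<alpha>2 \<beta>1 \<beta>2 a1 a2 b1 b2 :: nat
  assumes Bi: "binary_xtree X Ci" and B': "binary_xtree X C'"
    and finX: "finite X" and cardX: "3 \<le> card X"
    and inX: "x \<in> X" "a1 \<in> X" "a2 \<in> X" "b1 \<in> X" "b2 \<in> X"
    and ed: "{lab Ci x, w} \<in> edges Ci" "{w,a} \<in> edges Ci" "{w,b} \<in> edges Ci"
      "{a,\<alpha>1} \<in> edges Ci" "{a,\<alpha>2} \<in> edges Ci" "{b,\<beta>1} \<in> edges Ci" "{b,\<beta>2} \<in> edges Ci"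
    and dist: "w \<noteq> lab Ci x" "a \<noteq> b" "a \<noteq> w" "b \<noteq> w" "a \<noteq> lab Ci x" "b \<noteq> lab Ci x"
      "\<alpha>1 \<noteq> \<alpha>2" "\<alpha>1 \<noteq> w" "\<alpha>2 \<noteq> w" "\<beta>1 \<noteq> \<beta>2" "\<beta>1 \<noteq> w" "\<beta>2 \<noteq> w"
    and unl: "\<not> labeled X Ci w" "\<not> labeled X Ci a" "\<not> labeled X Ci b"
    and LA: "conn {e\<in>edges Ci. w \<notin> e \<and> a \<notin> e \<and> b \<notin> e} \<alpha>1 (lab Ci a1)"
      "conn {e\<in>edges Ci. w \<notin> e \<and> a \<notin> e \<and> b \<notin> e} \<alpha>2 (lab Ci a2)"
    and LB: "conn {e\<in>edges Ci. w \<notin> e \<and> a \<notin> e \<and> b \<notin> e} \<beta>1 (lab Ci b1)"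
      "conn {e\<in>edges Ci. w \<notin> e \<and> a \<notin> e \<and> b \<notin> e} \<beta>2 (lab Ci b2)"
    and niso: "\<not> iso X C' Ci"
    and cov: "covers X C' (contract Ci w a)"
begin

abbreviation "lx \<equiv> lab Ci x"
abbreviation "E \<equiv> edges Ci"
abbreviation "E' \<equiv> edges C'"
abbreviation "H \<equiv> {e\<in>edges Ci. w \<notin> e \<and> a \<notin> e \<and> b \<notin> e}"

lemma Fi: "is_xforest X Ci" using bin_xf[OF Bi] .
lemma F': "is_xforest X C'" using bin_xf[OF B'] .
lemma efE: "eform E" using xforest_eform[OF Fi] .
lemma efE': "eform E'" using xforest_eform[OF F'] .

lemma lab_unl: "z \<in> X \<Longrightarrow> lab Ci z \<noteq> w \<and> lab Ci z \<noteq> a \<and> lab Ci z \<noteq> b"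
  using unl unfolding labeled_def by auto

lemma lx_lab: "labeled X Ci lx" unfolding labeled_def using inX by simp

lemma eform_ne: "eform G \<Longrightarrow> {p,q} \<in> G \<Longrightarrow> p \<noteq> q"
  unfolding eform_def by (metis doubleton_eq_iff insert_absorb2)

lemma nbr_ne:
  assumes "{c,y} \<in> E" "{c,w} \<in> E" "{w,t} \<in> E" "c \<noteq> w" "t \<noteq> c"
  shows "y \<noteq> t"
proof
  assume "y = t"
  then have "{c,t} \<in> E" using assms(1) by simp
  moreover have "trifree E w c" using xf_trifree[OF Fi, of w c] assms(2,4) by (simp add: insert_commute)
  ultimately show False using assms(3) unfolding trifree_def by (metis insert_commute)
qed

lemma nbr_nl:
  assumes "{c,y} \<in> E" "c \<noteq> w"
  shows "y \<noteq> lx"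
proof
  assume "y = lx"
  then have "{c,lx} = {lx,w}" using lab_one[OF Bi lx_lab assms(1)[unfolded \<open>y = lx\<close>] ed(1)] by simp
  then show False using assms(2) by (auto simp: doubleton_eq_iff)
qed

lemma \<alpha>_props: "\<alpha>1 \<noteq> a" "\<alpha>2 \<noteq> a" "\<alpha>1 \<noteq> b" "\<alpha>2 \<noteq> b" "\<alpha>1 \<noteq> lx" "\<alpha>2 \<noteq> lx"
  using eform_ne[OF efE ed(4)] eform_ne[OF efE ed(5)]
    nbr_ne[OF ed(4) _ ed(3)] nbr_ne[OF ed(5) _ ed(3)] nbr_nl[OF ed(4)] nbr_nl[OF ed(5)] ed(2) dist
  by (auto simp: insert_commute)

lemma \<beta>_props: "\<beta>1 \<noteq> b" "\<beta>2 \<noteq> b" "\<beta>1 \<noteq> a" "\<beta>2 \<noteq> a" "\<beta>1 \<noteq> lx" "\<beta>2 \<noteq> lx"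
  using eform_ne[OF efE ed(6)] eform_ne[OF efE ed(7)]
    nbr_ne[OF ed(6) _ ed(2)] nbr_ne[OF ed(7) _ ed(2)] nbr_nl[OF ed(6)] nbr_nl[OF ed(7)] ed(3) dist
  by (auto simp: insert_commute)

lemma nbr_w: "e \<in> E \<Longrightarrow> w \<in> e \<Longrightarrow> e = {lx,w} \<or> e = {w,a} \<or> e = {w,b}"
  by (rule deg3_only[OF Bi ed(1,2,3)]) (use dist in \<open>auto simp: doubleton_eq_iff\<close>)

lemma nbr_a: "e \<in> E \<Longrightarrow> a \<in> e \<Longrightarrow> e = {w,a} \<or> e = {a,\<alpha>1} \<or> e = {a,\<alpha>2}"
  by (rule deg3_only[OF Bi ed(2,4,5)]) (use dist \<alpha>_props in \<open>auto simp: doubleton_eq_iff\<close>)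

lemma nbr_b: "e \<in> E \<Longrightarrow> b \<in> e \<Longrightarrow> e = {w,b} \<or> e = {b,\<beta>1} \<or> e = {b,\<beta>2}"
  by (rule deg3_only[OF Bi ed(3,6,7)]) (use dist \<beta>_props in \<open>auto simp: doubleton_eq_iff\<close>)



lemma Fj: "is_xforest X (contract Ci w a)" using cov unfolding covers_def by simp

lemma HG: "conn H s t \<Longrightarrow> conn (E - {{w,b}}) s t"
  by (erule conn_mono) auto

lemma r0: assumes a': "a' = a1 \<or> a' = a2"
  shows "resolved_by E {w,b} lx (lab Ci a') (lab Ci b1) (lab Ci b2)"
proof -
  define G0 where "G0 = E - {{w,b}}"
  have g1: "{lx,w} \<in> G0" "{w,a} \<in> G0" "{a,\<alpha>1} \<in> G0" "{a,\<alpha>2} \<in> G0" "{b,\<beta>1} \<in> G0" "{b,\<beta>2} \<in> G0"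
    using ed dist \<alpha>_props \<beta>_props unfolding G0_def by (auto simp: doubleton_eq_iff)
  have la: "conn G0 a (lab Ci a')"
  proof -
    have "conn G0 a \<alpha>1" "conn G0 a \<alpha>2" using conn_edge g1 by auto
    moreover have "conn G0 \<alpha>1 (lab Ci a1)" "conn G0 \<alpha>2 (lab Ci a2)" using HG[OF LA(1)] HG[OF LA(2)] G0_def by auto
    ultimately show ?thesis using a' conn_trans by blast
  qed
  have c1: "conn G0 lx (lab Ci a')"
    using conn_trans[OF conn_trans[OF conn_edge[OF g1(1)] conn_edge[OF g1(2)]] la] .
  have hb: "conn G0 \<beta>1 (lab Ci b1)" "conn G0 \<beta>2 (lab Ci b2)" using HG[OF LB(1)] HG[OF LB(2)] G0_def by auto
  have lb1: "conn G0 b (lab Ci b1)" using conn_trans[OF conn_edge[OF g1(5)] hb(1)] .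
  have lb2: "conn G0 b (lab Ci b2)" using conn_trans[OF conn_edge[OF g1(6)] hb(2)] .
  have c2: "conn G0 (lab Ci b1) (lab Ci b2)" using conn_trans[OF conn_sym[OF lb1] lb2] .
  have c3: "\<not> conn G0 lx (lab Ci b1)"
  proof
    assume "conn G0 lx (lab Ci b1)"
    then have "conn G0 w b" using conn_trans[OF conn_trans[OF conn_sym[OF conn_edge[OF g1(1)]]] conn_sym[OF lb1]] by blast
    then show False using bin_acyc[OF Bi ed(3)] G0_def by simp
  qed
  show ?thesis unfolding resolved_by_def using ed(3) c1 c2 c3 G0_def by simp
qed

end

locale crit2 = crit +
  fixes u v :: nat and f :: "nat \<Rightarrow> nat"
  assumes uvE: "{u,v} \<in> edges C'" and uvne: "u \<noteq> v"
   and fb: "bij_betw f (verts Ci - {a}) (verts C' - {v})"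
   and fe: "cE (edges C') u v = (\<lambda>e. f ` e) ` cE (edges Ci) w a"
   and fl: "\<forall>z\<in>X. cg u v (lab C' z) = f (cg w a (lab Ci z))"
begin

lemma finj: "inj_on f (verts Ci - {a})" using fb bij_betw_def by blast

lemma fV: "z \<in> verts Ci - {a} \<Longrightarrow> f z \<in> verts C' \<and> f z \<noteq> v"
  using fb bij_betwE by blast

lemma VF: "w \<in> verts Ci - {a}" "lx \<in> verts Ci - {a}" "b \<in> verts Ci - {a}"
  "\<alpha>1 \<in> verts Ci - {a}" "\<alpha>2 \<in> verts Ci - {a}"
  using edge_vert[OF Fi ed(1)] edge_vert[OF Fi ed(3)] edge_vert[OF Fi ed(4)] edge_vert[OF Fi ed(5)]
    dist \<alpha>_props by auto

lemma finj': "y \<in> verts Ci - {a} \<Longrightarrow> z \<in> verts Ci - {a} \<Longrightarrow> f y = f z \<longleftrightarrow> y = z"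
  using finj inj_on_eq_iff by metis

lemma Fed: "{w,y} \<in> cE E w a" if yy: "y \<in> {lx,b,\<alpha>1,\<alpha>2}"
proof -
  have c: "cg w a ` {lx,w} = {w,lx}" "cg w a ` {w,b} = {w,b}" "cg w a ` {a,\<alpha>1} = {w,\<alpha>1}" "cg w a ` {a,\<alpha>2} = {w,\<alpha>2}"
    using dist \<alpha>_props unfolding cg_def by auto
  have n: "{lx,w} \<noteq> {w,a}" "{w,b} \<noteq> {w,a}" "{a,\<alpha>1} \<noteq> {w,a}" "{a,\<alpha>2} \<noteq> {w,a}"
    using dist \<alpha>_props by (auto simp: doubleton_eq_iff)
  have "\<exists>e0. e0 \<in> E - {{w,a}} \<and> cg w a ` e0 = {w,y}"
  proof -
    consider "y = lx" | "y = b" | "y = \<alpha>1" | "y = \<alpha>2" using yy by blast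
    then show ?thesis
    proof cases
      case 1 then show ?thesis using c(1) n(1) ed(1) by blast
    next
      case 2 then show ?thesis using c(2) n(2) ed(3) by blast
    next
      case 3 then show ?thesis using c(3) n(3) ed(4) by blast
    next
      case 4 then show ?thesis using c(4) n(4) ed(5) by blast
    qed
  qed
  then show ?thesis unfolding cE_def by (metis image_eqI)
qed

lemma Ef: "{f w, f y} \<in> cE E' u v" if "y \<in> {lx,b,\<alpha>1,\<alpha>2}"
proof -
  have "f ` {w,y} \<in> (\<lambda>e. f ` e) ` cE E w a" using Fed[OF that] by (rule imageI)
  then show ?thesis using fe by simp
qed

lemma Yv: "y \<in> {lx,b,\<alpha>1,\<alpha>2} \<Longrightarrow> y \<in> verts Ci - {a} \<and> y \<noteq> w"
  using VF dist \<alpha>_props by auto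

lemma Ydist: "lx \<noteq> b" "lx \<noteq> \<alpha>1" "lx \<noteq> \<alpha>2" "b \<noteq> \<alpha>1" "b \<noteq> \<alpha>2" "\<alpha>1 \<noteq> \<alpha>2"
  using dist \<alpha>_props by auto

lemma fw_u: "f w = u"
proof (rule ccontr)
  assume Wu: "f w \<noteq> u"
  define W where "W = f w"
  have WV: "W \<noteq> v" using fV[OF VF(1)] W_def by simp
  have ex: "\<exists>t. {W,t} \<in> E' \<and> (t = f y \<or> (t = v \<and> f y = u))" if y: "y \<in> {lx,b,\<alpha>1,\<alpha>2}" for y
  proof -
    obtain s' t' where st: "{s',t'} \<in> E'" "cg u v s' = W" "cg u v t' = f y"
      using cE_pre[OF Ef[OF y] efE'] W_def by blast
    have s': "s' = W" using cg_other[OF _ st(2)] Wu W_def by simp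
    show ?thesis
    proof (cases "f y = u")
      case True
      then have "t' = u \<or> t' = v" using cg_u st(3) by simp
      then show ?thesis using st(1) s' True by blast
    next
      case False
      then have "t' = f y" using cg_other[OF _ st(3)] by simp
      then show ?thesis using st(1) s' by blast
    qed
  qed
  have td: "t1 \<noteq> t2" if "y1 \<in> {lx,b,\<alpha>1,\<alpha>2}" "y2 \<in> {lx,b,\<alpha>1,\<alpha>2}" "y1 \<noteq> y2"
    "t1 = f y1 \<or> (t1 = v \<and> f y1 = u)" "t2 = f y2 \<or> (t2 = v \<and> f y2 = u)" for y1 y2 t1 t2
  proof -
    have v1: "y1 \<in> verts Ci - {a}" and v2: "y2 \<in> verts Ci - {a}" using Yv that(1,2) by auto
    have i: "f y1 \<noteq> f y2" using finj'[OF v1 v2] that(3) by simp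
    have n1: "f y1 \<noteq> v" and n2: "f y2 \<noteq> v" using fV[OF v1] fV[OF v2] by auto
    show ?thesis using that(4) that(5) i n1 n2 by (elim disjE conjE) simp_all
  qed
  obtain t1 where t1: "{W,t1} \<in> E'" "t1 = f lx \<or> (t1 = v \<and> f lx = u)" using ex by blast
  obtain t2 where t2: "{W,t2} \<in> E'" "t2 = f b \<or> (t2 = v \<and> f b = u)" using ex by blast
  obtain t3 where t3: "{W,t3} \<in> E'" "t3 = f \<alpha>1 \<or> (t3 = v \<and> f \<alpha>1 = u)" using ex by blast
  obtain t4 where t4: "{W,t4} \<in> E'" "t4 = f \<alpha>2 \<or> (t4 = v \<and> f \<alpha>2 = u)" using ex by blast
  have Y: "lx \<in> {lx,b,\<alpha>1,\<alpha>2}" "b \<in> {lx,b,\<alpha>1,\<alpha>2}" "\<alpha>1 \<in> {lx,b,\<alpha>1,\<alpha>2}" "\<alpha>2 \<in> {lx,b,\<alpha>1,\<alpha>2}" by auto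
  note D = Ydist
  have "t1 \<noteq> t2" "t1 \<noteq> t3" "t1 \<noteq> t4" "t2 \<noteq> t3" "t2 \<noteq> t4" "t3 \<noteq> t4"
    using td[OF Y(1) Y(2) D(1) t1(2) t2(2)] td[OF Y(1) Y(3) D(2) t1(2) t3(2)] td[OF Y(1) Y(4) D(3) t1(2) t4(2)]
      td[OF Y(2) Y(3) D(4) t2(2) t3(2)] td[OF Y(2) Y(4) D(5) t2(2) t4(2)] td[OF Y(3) Y(4) D(6) t3(2) t4(2)] by auto
  then have "{W,t1} \<noteq> {W,t2}" "{W,t1} \<noteq> {W,t3}" "{W,t1} \<noteq> {W,t4}" "{W,t2} \<noteq> {W,t3}"
    "{W,t2} \<noteq> {W,t4}" "{W,t3} \<noteq> {W,t4}" by (auto simp: doubleton_eq_iff)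
  then show False using four_edges[OF B' t1(1) t2(1) t3(1) t4(1)] by auto
qed

lemma PQ: "{u, f y} \<in> E' \<or> {v, f y} \<in> E'" if y: "y \<in> {lx,b,\<alpha>1,\<alpha>2}"
proof -
  obtain s' t' where st: "{s',t'} \<in> E'" "cg u v s' = u" "cg u v t' = f y"
    using cE_pre[OF Ef[OF y] efE'] fw_u by blast
  have "f y \<noteq> u" using fw_u finj'[of y w] Yv[OF y] VF(1) by auto
  then have "t' = f y" using cg_other[OF _ st(3)] by simp
  moreover have "s' = u \<or> s' = v" using cg_u[OF st(2)] .
  ultimately show ?thesis using st(1) by blast
qed

lemma fy_ne: "y \<in> {lx,b,\<alpha>1,\<alpha>2} \<Longrightarrow> f y \<noteq> u \<and> f y \<noteq> v"
  using fw_u finj'[of y w] Yv VF(1) fV by auto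

lemma notboth: "y \<in> {lx,b,\<alpha>1,\<alpha>2} \<Longrightarrow> \<not> ({u, f y} \<in> E' \<and> {v, f y} \<in> E')"
  using xf_trifree[OF F' uvE uvne] unfolding trifree_def by blast

lemma atmost2:
  assumes "p = u \<or> p = v" "y1 \<in> {lx,b,\<alpha>1,\<alpha>2}" "y2 \<in> {lx,b,\<alpha>1,\<alpha>2}" "y3 \<in> {lx,b,\<alpha>1,\<alpha>2}"
    "y1 \<noteq> y2" "y1 \<noteq> y3" "y2 \<noteq> y3"
    "{p, f y1} \<in> E'" "{p, f y2} \<in> E'" "{p, f y3} \<in> E'"
  shows False
proof -
  have ne: "f y1 \<noteq> f y2" "f y1 \<noteq> f y3" "f y2 \<noteq> f y3"
    using assms(5-7) finj' Yv assms(2-4) by meson+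
  have n: "f yi \<noteq> u \<and> f yi \<noteq> v" if "yi \<in> {lx,b,\<alpha>1,\<alpha>2}" for yi using fy_ne[OF that] .
  have e0: "{u,v} \<in> E'" using uvE .
  show False
    using four_edges[OF B' e0 assms(8) assms(9) assms(10), of p] assms(1) ne n[OF assms(2)] n[OF assms(3)] n[OF assms(4)]
    by (auto simp: doubleton_eq_iff)
qed


lemma cases_pq:
  assumes pq: "(p = u \<and> q = v) \<or> (p = v \<and> q = u)" and pl: "{p, f lx} \<in> E'"
  shows "({p,f b} \<in> E' \<and> {q, f \<alpha>1} \<in> E' \<and> {q, f \<alpha>2} \<in> E') \<or>
    ({p,f \<alpha>1} \<in> E' \<and> {q, f b} \<in> E' \<and> {q, f \<alpha>2} \<in> E') \<or>
    ({p,f \<alpha>2} \<in> E' \<and> {q, f b} \<in> E' \<and> {q, f \<alpha>1} \<in> E')"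
proof -
  have Y: "lx \<in> {lx,b,\<alpha>1,\<alpha>2}" "b \<in> {lx,b,\<alpha>1,\<alpha>2}" "\<alpha>1 \<in> {lx,b,\<alpha>1,\<alpha>2}" "\<alpha>2 \<in> {lx,b,\<alpha>1,\<alpha>2}" by auto
  have o: "{p, f y} \<in> E' \<or> {q, f y} \<in> E'" if "y \<in> {lx,b,\<alpha>1,\<alpha>2}" for y using PQ[OF that] pq by blast
  have nb: "\<not> ({p, f y} \<in> E' \<and> {q, f y} \<in> E')" if "y \<in> {lx,b,\<alpha>1,\<alpha>2}" for y using notboth[OF that] pq by blast
  have p': "p = u \<or> p = v" and q': "q = u \<or> q = v" using pq by auto
  note D = Ydist
  have a1: "\<not> ({p, f b} \<in> E' \<and> {p, f \<alpha>1} \<in> E')" using atmost2[OF p' Y(1) Y(2) Y(3) D(1) D(2) D(4) pl] by blast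
  have a2: "\<not> ({p, f b} \<in> E' \<and> {p, f \<alpha>2} \<in> E')" using atmost2[OF p' Y(1) Y(2) Y(4) D(1) D(3) D(5) pl] by blast
  have a3: "\<not> ({p, f \<alpha>1} \<in> E' \<and> {p, f \<alpha>2} \<in> E')" using atmost2[OF p' Y(1) Y(3) Y(4) D(2) D(3) D(6) pl] by blast
  have a4: "\<not> ({q, f b} \<in> E' \<and> {q, f \<alpha>1} \<in> E' \<and> {q, f \<alpha>2} \<in> E')" using atmost2[OF q' Y(2) Y(3) Y(4) D(4) D(5) D(6)] by blast
  show ?thesis using o[OF Y(2)] o[OF Y(3)] o[OF Y(4)] a1 a2 a3 a4 nb[OF Y(2)] nb[OF Y(3)] nb[OF Y(4)] by blast
qed

lemma cases_all:
  obtains p q where "(p = u \<and> q = v) \<or> (p = v \<and> q = u)" "{p, f lx} \<in> E'"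
   "({p,f b} \<in> E' \<and> {q, f \<alpha>1} \<in> E' \<and> {q, f \<alpha>2} \<in> E') \<or>
    ({p,f \<alpha>1} \<in> E' \<and> {q, f b} \<in> E' \<and> {q, f \<alpha>2} \<in> E') \<or>
    ({p,f \<alpha>2} \<in> E' \<and> {q, f b} \<in> E' \<and> {q, f \<alpha>1} \<in> E')"
proof -
  have "lx \<in> {lx,b,\<alpha>1,\<alpha>2}" by simp
  from PQ[OF this] show ?thesis
  proof
    assume "{u, f lx} \<in> E'" then show ?thesis using that cases_pq[of u v] by blast
  next
    assume "{v, f lx} \<in> E'" then show ?thesis using that cases_pq[of v u] by blast
  qed
qed

lemma FMAP:
  assumes e: "e \<in> E" "w \<notin> e" "a \<notin> e"
  shows "f ` e \<in> E' \<and> u \<notin> f ` e \<and> v \<notin> f ` e"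
proof -
  have eV: "e \<subseteq> verts Ci - {a}" using xforest_sub[OF Fi e(1)] e(3) by auto
  have ce: "cg w a ` e = e" using e(3) unfolding cg_def by (auto simp: image_iff)
  have "e \<noteq> {w,a}" using e(2) by auto
  then have "e \<in> cE E w a" using e(1) ce unfolding cE_def by (metis DiffI image_eqI singletonD)
  then have fe1: "f ` e \<in> cE E' u v" using fe by auto
  have nu: "u \<notin> f ` e"
  proof
    assume "u \<in> f ` e"
    then obtain z where "z \<in> e" "f z = u" by auto
    then show False using fw_u finj'[of z w] eV VF(1) e(2) by auto
  qed
  have nv: "v \<notin> f ` e" using fV eV by blast
  obtain e'' where e'': "e'' \<in> E' - {{u,v}}" "f ` e = cg u v ` e''" using fe1 unfolding cE_def by (rule imageE)
  then have e': "e'' \<in> E'" "e'' \<noteq> {u,v}" "cg u v ` e'' = f ` e" by auto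
  define e' where "e' = e''"
  note e' = e'[folded e'_def]
  have im: "cg u v z \<in> f ` e" if "z \<in> e'" for z using e'(3) that by blast
  have "cg u v u = u" "cg u v v = u" using uvne unfolding cg_def by auto
  then have "u \<notin> e'" "v \<notin> e'" using im nu by metis+
  then have "cg u v ` e' = e'" unfolding cg_def by (auto simp: image_iff)
  then show ?thesis using e' nu nv by simp
qed

lemma Haw_conn: "conn {e\<in>E. w \<notin> e \<and> a \<notin> e} s t \<Longrightarrow> conn (E' - {{u,v}}) (f s) (f t)"
proof (erule conn_map)
  fix y z assume "adj {e\<in>E. w \<notin> e \<and> a \<notin> e} y z"
  then have "{y,z} \<in> E" "w \<notin> {y,z}" "a \<notin> {y,z}" unfolding adj_def by auto
  from FMAP[OF this] have "{f y, f z} \<in> E'" "u \<notin> {f y, f z}" by auto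
  then show "adj (E' - {{u,v}}) (f y) (f z) \<or> f y = f z" unfolding adj_def by auto
qed

lemma H_conn: "conn H s t \<Longrightarrow> conn (E' - {{u,v}}) (f s) (f t)"
  by (rule Haw_conn, erule conn_mono) auto

lemma lab': "z \<in> X \<Longrightarrow> lab C' z \<noteq> v \<Longrightarrow> lab C' z = f (lab Ci z)"
  using fl lab_unl cg_id by metis

lemma p_edges:
  assumes pq: "(p = u \<and> q = v) \<or> (p = v \<and> q = u)" and e1: "{p, f y1} \<in> E'" and e2: "{p, f y2} \<in> E'"
    and y: "y1 \<in> {lx,b,\<alpha>1,\<alpha>2}" "y2 \<in> {lx,b,\<alpha>1,\<alpha>2}" "y1 \<noteq> y2"
  shows "\<not> labeled X C' p" "\<And>e. e \<in> E' \<Longrightarrow> p \<in> e \<Longrightarrow> e = {p,q} \<or> e = {p, f y1} \<or> e = {p, f y2}"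
proof -
  have pqE: "{p,q} \<in> E'" using uvE pq by (auto simp: insert_commute)
  have n1: "f y1 \<noteq> u \<and> f y1 \<noteq> v" and n2: "f y2 \<noteq> u \<and> f y2 \<noteq> v" using fy_ne y by auto
  have ne: "f y1 \<noteq> f y2" using finj' Yv y by meson
  have d: "{p,q} \<noteq> {p, f y1}" "{p,q} \<noteq> {p, f y2}" "{p, f y1} \<noteq> {p, f y2}"
    using pq n1 n2 ne by (auto simp: doubleton_eq_iff)
  show "\<not> labeled X C' p" using two_unlab(1)[OF B' e1 e2 d(3)] by simp
  show "\<And>e. e \<in> E' \<Longrightarrow> p \<in> e \<Longrightarrow> e = {p,q} \<or> e = {p, f y1} \<or> e = {p, f y2}"
    by (rule deg3_only[OF B' pqE e1 e2 d]) auto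
qed

lemma lab_C': "z \<in> X \<Longrightarrow> \<not> labeled X C' v \<Longrightarrow> lab C' z = f (lab Ci z)"
  using lab' unfolding labeled_def by auto



lemma iso_case:
  assumes pq: "(p = u \<and> q = v) \<or> (p = v \<and> q = u)"
    and e: "{p, f lx} \<in> E'" "{p, f b} \<in> E'" "{q, f \<alpha>1} \<in> E'" "{q, f \<alpha>2} \<in> E'"
  shows False
proof -
  have qp: "(q = u \<and> p = v) \<or> (q = v \<and> p = u)" using pq by auto
  have Y: "lx \<in> {lx,b,\<alpha>1,\<alpha>2}" "b \<in> {lx,b,\<alpha>1,\<alpha>2}" "\<alpha>1 \<in> {lx,b,\<alpha>1,\<alpha>2}" "\<alpha>2 \<in> {lx,b,\<alpha>1,\<alpha>2}" by auto
  note pe = p_edges[OF pq e(1) e(2) Y(1) Y(2) Ydist(1)]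
  note qe = p_edges[OF qp e(3) e(4) Y(3) Y(4) Ydist(6)]
  have vunl: "\<not> labeled X C' v" using pe(1) qe(1) pq by auto
  have pqE: "{p,q} \<in> E'" using uvE pq by (auto simp: insert_commute)
  have pV: "p \<in> verts C'" and qV: "q \<in> verts C'" using edge_vert[OF F' pqE] by auto
  have aV: "a \<in> verts Ci" using edge_vert[OF Fi ed(2)] by simp
  have wV: "w \<in> verts Ci" using VF(1) by simp
  define h where "h z = (if z = w then p else if z = a then q else f z)" for z
  have hw: "h w = p" and ha: "h a = q" using dist unfolding h_def by auto
  have hf: "h z = f z" if "z \<noteq> w" "z \<noteq> a" for z using that unfolding h_def by simp
  have fu: "f z \<noteq> u \<and> f z \<noteq> v" if "z \<in> verts Ci" "z \<noteq> w" "z \<noteq> a" for z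
    using fw_u finj'[of z w] fV[of z] VF(1) that by auto
  have inj: "inj_on h (verts Ci)"
  proof (rule inj_onI)
    fix y z assume yz: "y \<in> verts Ci" "z \<in> verts Ci" "h y = h z"
    show "y = z"
    proof (cases "y \<in> {w,a}")
      case True
      then show ?thesis
      proof (cases "z \<in> {w,a}")
        case True
        then show ?thesis using \<open>y \<in> {w,a}\<close> yz(3) hw ha pq uvne dist by auto
      next
        case False
        have "h y = u \<or> h y = v" using \<open>y \<in> {w,a}\<close> hw ha pq by auto
        moreover have "h z = f z" "f z \<noteq> u" "f z \<noteq> v" using False hf fu[OF yz(2)] by auto
        ultimately show ?thesis using yz(3) by auto
      qed
    next
      case False
      then show ?thesis
      proof (cases "z \<in> {w,a}")
        case True
        have "h z = u \<or> h z = v" using True hw ha pq by auto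
        moreover have "h y = f y" "f y \<noteq> u" "f y \<noteq> v" using \<open>y \<notin> {w,a}\<close> hf fu[OF yz(1)] by auto
        ultimately show ?thesis using yz(3) by auto
      next
        case False
        then show ?thesis using \<open>y \<notin> {w,a}\<close> yz hf finj' by auto
      qed
    qed
  qed
  have img: "h ` verts Ci = verts C'"
  proof
    show "h ` verts Ci \<subseteq> verts C'"
    proof
      fix y assume "y \<in> h ` verts Ci"
      then obtain z where z: "z \<in> verts Ci" "y = h z" by auto
      show "y \<in> verts C'" using z hw ha pV qV hf fV[of z] by (cases "z = w"; cases "z = a") auto
    qed
  next
    show "verts C' \<subseteq> h ` verts Ci"
    proof
      fix y assume yV: "y \<in> verts C'"
      show "y \<in> h ` verts Ci"
      proof (cases "y = u \<or> y = v")
        case True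
        then have "y = h w \<or> y = h a" using hw ha pq by auto
        then show ?thesis using wV aV by auto
      next
        case False
        then have "y \<in> verts C' - {v}" using yV by auto
        then obtain z where z: "z \<in> verts Ci - {a}" "y = f z" using fb by (metis bij_betw_def imageE)
        have "z \<noteq> w" using z False fw_u by auto
        then have "h z = y" using z hf by auto
        moreover have "z \<in> verts Ci" using z by auto
        ultimately show ?thesis by (metis imageI)
      qed
    qed
  qed
  have b: "bij_betw h (verts Ci) (verts C')" using inj img by (simp add: bij_betw_def)
  have himg: "h ` e = f ` e" if "w \<notin> e" "a \<notin> e" for e
    by (rule image_cong[OF refl]) (metis that hf)
  have hl: "h lx = f lx" "h b = f b" "h \<alpha>1 = f \<alpha>1" "h \<alpha>2 = f \<alpha>2"
    using hf dist \<alpha>_props by auto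
  have ee: "edges C' = (\<lambda>e. h ` e) ` edges Ci"
  proof
    show "E' \<subseteq> (\<lambda>e. h ` e) ` E"
    proof
      fix e' assume e': "e' \<in> E'"
      show "e' \<in> (\<lambda>e. h ` e) ` E"
      proof (cases "p \<in> e'")
        case True
        then have "e' = {p,q} \<or> e' = {p, f lx} \<or> e' = {p, f b}" using pe(2)[OF e'] by simp
        moreover have "{p,q} = h ` {w,a}" "{p, f lx} = h ` {lx,w}" "{p, f b} = h ` {w,b}"
          using hw ha hl by auto
        ultimately show ?thesis using ed by blast
      next
        case np: False
        show ?thesis
        proof (cases "q \<in> e'")
          case True
          then have "e' = {q,p} \<or> e' = {q, f \<alpha>1} \<or> e' = {q, f \<alpha>2}" using qe(2)[OF e'] by simp
          moreover have "{q,p} = h ` {w,a}" "{q, f \<alpha>1} = h ` {a,\<alpha>1}" "{q, f \<alpha>2} = h ` {a,\<alpha>2}"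
            using hw ha hl by auto
          ultimately show ?thesis using ed by blast
        next
          case False
          then have nuv: "u \<notin> e'" "v \<notin> e'" using np pq by auto
          have ce: "cg u v ` e' = e'" using nuv unfolding cg_def by (auto simp: image_iff)
          have "e' \<noteq> {u,v}" using nuv by auto
          then have "e' \<in> cE E' u v" using e' ce unfolding cE_def by (metis DiffI image_eqI singletonD)
          then have "e' \<in> (\<lambda>e. f ` e) ` cE E w a" using fe by simp
          then obtain \<epsilon> where eps: "\<epsilon> \<in> cE E w a" "e' = f ` \<epsilon>" by blast
          then obtain e0 where e0: "e0 \<in> E - {{w,a}}" "\<epsilon> = cg w a ` e0" unfolding cE_def by blast
          have "w \<notin> \<epsilon>" using eps(2) nuv fw_u by auto
          then have nwa: "w \<notin> e0" "a \<notin> e0" using e0(2) unfolding cg_def by (auto simp: image_iff)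
          then have "cg w a ` e0 = e0" unfolding cg_def by (auto simp: image_iff)
          then have "e' = f ` e0" using eps e0 by simp
          moreover have "h ` e0 = f ` e0" using himg nwa by simp
          moreover have "e0 \<in> E" using e0(1) by simp
          ultimately show ?thesis by (metis imageI)
        qed
      qed
    qed
  next
    show "(\<lambda>e. h ` e) ` E \<subseteq> E'"
    proof
      fix e' assume "e' \<in> (\<lambda>e. h ` e) ` E"
      then obtain e where e0: "e \<in> E" "e' = h ` e" by blast
      show "e' \<in> E'"
      proof (cases "w \<in> e")
        case True
        then have "e = {lx,w} \<or> e = {w,a} \<or> e = {w,b}" using nbr_w e0(1) by blast
        moreover have "h ` {lx,w} = {p, f lx}" "h ` {w,a} = {p,q}" "h ` {w,b} = {p, f b}"
          using hw ha hl by auto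
        ultimately show ?thesis using e0 e pqE by (auto simp: insert_commute)
      next
        case nw: False
        show ?thesis
        proof (cases "a \<in> e")
          case True
          then have "e = {w,a} \<or> e = {a,\<alpha>1} \<or> e = {a,\<alpha>2}" using nbr_a e0(1) by blast
          moreover have "h ` {a,\<alpha>1} = {q, f \<alpha>1}" "h ` {w,a} = {p,q}" "h ` {a,\<alpha>2} = {q, f \<alpha>2}"
            using hw ha hl by auto
          ultimately show ?thesis using e0 e pqE by auto
        next
          case False
          have "h ` e = f ` e" using himg nw False by simp
          then show ?thesis using FMAP[OF e0(1) nw False] e0(2) by simp
        qed
      qed
    qed
  qed
  have ll: "lab C' z = h (lab Ci z)" if "z \<in> X" for z
    using lab_C'[OF that vunl] hf lab_unl[OF that] by simp
  have "iso X Ci C'" unfolding iso_def using b ee ll by blast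
  then show False using iso_sym[OF Fi] niso by blast
qed

lemma E2:
  assumes a': "a' = a1 \<or> a' = a2"
  shows "\<exists>e2. e2 \<noteq> {u,v} \<and> resolved_by E' e2 (lab C' x) (lab C' a') (lab C' b1) (lab C' b2)"
proof -
  have tw: "trifree E w a" using xf_trifree[OF Fi ed(2) dist(3)[symmetric]] .
  have ne: "{w,b} \<noteq> {w,a}" using dist by (auto simp: doubleton_eq_iff)
  have aX: "a' \<in> X" using a' inX by auto
  note r1 = contract_survive[OF efE ed(2) dist(3)[symmetric] tw r0[OF a'] ne]
  have cgl: "cg w a (lab Ci z) = lab Ci z" if "z \<in> X" for z using lab_unl[OF that] cg_id by blast
  have inV: "lab Ci z \<in> verts Ci - {a}" if "z \<in> X" for z using lab_unl[OF that] xforest_lab[OF Fi that] by blast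
  have subj: "\<And>e. e \<in> cE E w a \<Longrightarrow> e \<subseteq> verts Ci - {a}"
    using xforest_sub[OF Fj] unfolding contract_simps by blast
  have efj: "eform (cE E w a)" using xforest_eform[OF Fj] unfolding contract_simps .
  have e0: "cg w a ` {w,b} \<in> cE E w a" using r1 unfolding resolved_by_def by simp
  have r2: "resolved_by (cE E' u v) (f ` cg w a ` {w,b}) (f (lab Ci x)) (f (lab Ci a')) (f (lab Ci b1)) (f (lab Ci b2))"
    using iso_resolved_fwd[OF finj subj efj inV[OF inX(1)] inV[OF aX] inV[OF inX(4)] inV[OF inX(5)] e0] r1
      cgl inX aX fe by simp
  have fl': "f (lab Ci z) = cg u v (lab C' z)" if "z \<in> X" for z using fl that cgl by simp
  have r2': "resolved_by (cE E' u v) (f ` cg w a ` {w,b}) (cg u v (lab C' x)) (cg u v (lab C' a')) (cg u v (lab C' b1)) (cg u v (lab C' b2))"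
    using r2 fl' inX aX by simp
  show ?thesis using contract_back[OF efE' uvE uvne xf_trifree[OF F' uvE uvne] r2'] by blast
qed

lemma mixed_case:
  assumes pq: "(p = u \<and> q = v) \<or> (p = v \<and> q = u)"
    and e: "{p, f lx} \<in> E'" "{p, f \<alpha>i} \<in> E'" "{q, f b} \<in> E'" "{q, f \<alpha>o} \<in> E'"
    and sel: "(\<alpha>i = \<alpha>1 \<and> \<alpha>o = \<alpha>2 \<and> ai = a1 \<and> ao = a2) \<or> (\<alpha>i = \<alpha>2 \<and> \<alpha>o = \<alpha>1 \<and> ai = a2 \<and> ao = a1)"
    and y: "y = b1 \<or> y = b2"
  shows "resolved_by E' {u,v} (lab C' x) (lab C' ai) (lab C' ao) (lab C' y)"
proof -
  have qp: "(q = u \<and> p = v) \<or> (q = v \<and> p = u)" using pq by auto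
  have Yi: "\<alpha>i \<in> {lx,b,\<alpha>1,\<alpha>2}" "\<alpha>o \<in> {lx,b,\<alpha>1,\<alpha>2}" "lx \<in> {lx,b,\<alpha>1,\<alpha>2}" "b \<in> {lx,b,\<alpha>1,\<alpha>2}"
    using sel by auto
  have dd: "lx \<noteq> \<alpha>i" "b \<noteq> \<alpha>o" using sel Ydist by auto
  note pe = p_edges[OF pq e(1) e(2) Yi(3) Yi(1) dd(1)]
  note qe = p_edges[OF qp e(3) e(4) Yi(4) Yi(2) dd(2)]
  have vunl: "\<not> labeled X C' v" using pe(1) qe(1) pq by auto
  have aiX: "ai \<in> X" "ao \<in> X" "y \<in> X" using sel y inX by auto
  note lC = lab_C'[OF _ vunl]
  define G where "G = E' - {{u,v}}"
  have nuv: "f z \<noteq> u \<and> f z \<noteq> v" if "z \<in> {lx,b,\<alpha>1,\<alpha>2}" for z using fy_ne[OF that] .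
  have inG: "{p, f z} \<in> G" if "{p, f z} \<in> E'" "z \<in> {lx,b,\<alpha>1,\<alpha>2}" for z p
    using that nuv[OF that(2)] unfolding G_def by (auto simp: doubleton_eq_iff)
  have g: "{p, f lx} \<in> G" "{p, f \<alpha>i} \<in> G" "{q, f b} \<in> G" "{q, f \<alpha>o} \<in> G"
    using inG e Yi by auto
  have LAi: "conn H \<alpha>i (lab Ci ai)" and LAo: "conn H \<alpha>o (lab Ci ao)" using sel LA by auto
  obtain \<beta> where bt: "{b,\<beta>} \<in> E" "\<beta> \<noteq> w" "\<beta> \<noteq> a" "conn H \<beta> (lab Ci y)"
    using y ed(6,7) LB \<beta>_props dist by blast
  have fb\<beta>: "conn G (f b) (f \<beta>)"
  proof -
    have "{b,\<beta>} \<in> {e\<in>E. w \<notin> e \<and> a \<notin> e}" using bt dist by auto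
    then show ?thesis using Haw_conn[OF conn_edge] G_def by simp
  qed
  have c1: "conn G (f lx) (f (lab Ci ai))"
    using conn_trans[OF conn_trans[OF conn_sym[OF conn_edge[OF g(1)]] conn_edge[OF g(2)]] H_conn[OF LAi, folded G_def]] .
  have qo: "conn G q (f (lab Ci ao))"
    using conn_trans[OF conn_edge[OF g(4)] H_conn[OF LAo, folded G_def]] .
  have qy: "conn G q (f (lab Ci y))"
    using conn_trans[OF conn_trans[OF conn_edge[OF g(3)] fb\<beta>] H_conn[OF bt(4), folded G_def]] .
  have c2: "conn G (f (lab Ci ao)) (f (lab Ci y))" using conn_trans[OF conn_sym[OF qo] qy] .
  have c3: "\<not> conn G (f lx) (f (lab Ci ao))"
  proof
    assume h: "conn G (f lx) (f (lab Ci ao))"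
    have "conn G p q" using conn_trans[OF conn_trans[OF conn_edge[OF g(1)] h] conn_sym[OF qo]] .
    moreover have "{p,q} \<in> E'" "E' - {{p,q}} = G" using uvE pq unfolding G_def by (auto simp: insert_commute)
    ultimately show False using bin_acyc[OF B'] by metis
  qed
  show ?thesis unfolding resolved_by_def using uvE c1 c2 c3 lC aiX inX(1) G_def by simp
qed

end

lemma (in crit) main_struct:
  "\<exists>ai ao e1. ((ai = a1 \<and> ao = a2) \<or> (ai = a2 \<and> ao = a1)) \<and> e1 \<in> E' \<and>
   (\<forall>y. (y = b1 \<or> y = b2) \<longrightarrow> resolved_by E' e1 (lab C' x) (lab C' ai) (lab C' ao) (lab C' y)) \<and>
   (\<forall>a'. (a' = a1 \<or> a' = a2) \<longrightarrow> (\<exists>e2. e2 \<noteq> e1 \<and> resolved_by E' e2 (lab C' x) (lab C' a') (lab C' b1) (lab C' b2)))"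
proof -
  obtain u v where uv: "{u,v} \<in> E'" "u \<noteq> v" "iso X (contract Ci w a) (contract C' u v)"
    using bin_cover[OF B' cardX finX cov] by blast
  obtain f where f: "bij_betw f (verts Ci - {a}) (verts C' - {v})"
    "cE (edges C') u v = (\<lambda>e. f ` e) ` cE (edges Ci) w a"
    "\<forall>z\<in>X. cg u v (lab C' z) = f (cg w a (lab Ci z))"
    using uv(3) unfolding iso_def contract_simps by auto
  interpret c2: crit2 X Ci C' x w a b \<alpha>1 \<alpha>2 \<beta>1 \<beta>2 a1 a2 b1 b2 u v f
    by (unfold_locales) (use uv f in auto)
  obtain p q where pq: "(p = u \<and> q = v) \<or> (p = v \<and> q = u)" "{p, f lx} \<in> E'"
   "({p,f b} \<in> E' \<and> {q, f \<alpha>1} \<in> E' \<and> {q, f \<alpha>2} \<in> E') \<or>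
    ({p,f \<alpha>1} \<in> E' \<and> {q, f b} \<in> E' \<and> {q, f \<alpha>2} \<in> E') \<or>
    ({p,f \<alpha>2} \<in> E' \<and> {q, f b} \<in> E' \<and> {q, f \<alpha>1} \<in> E')"
    using c2.cases_all by blast
  have E2': "\<forall>a'. (a' = a1 \<or> a' = a2) \<longrightarrow> (\<exists>e2. e2 \<noteq> {u,v} \<and> resolved_by E' e2 (lab C' x) (lab C' a') (lab C' b1) (lab C' b2))"
    using c2.E2 by blast
  from pq(3) show ?thesis
  proof (elim disjE conjE)
    assume "{p,f b} \<in> E'" "{q, f \<alpha>1} \<in> E'" "{q, f \<alpha>2} \<in> E'"
    then show ?thesis using c2.iso_case[OF pq(1) pq(2)] by blast
  next
    assume h: "{p,f \<alpha>1} \<in> E'" "{q, f b} \<in> E'" "{q, f \<alpha>2} \<in> E'"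
    have "\<forall>y. (y = b1 \<or> y = b2) \<longrightarrow> resolved_by E' {u,v} (lab C' x) (lab C' a1) (lab C' a2) (lab C' y)"
      using c2.mixed_case[OF pq(1) pq(2) h(1) h(2) h(3)] by blast
    then show ?thesis using E2' uv(1) by blast
  next
    assume h: "{p,f \<alpha>2} \<in> E'" "{q, f b} \<in> E'" "{q, f \<alpha>1} \<in> E'"
    have "\<forall>y. (y = b1 \<or> y = b2) \<longrightarrow> resolved_by E' {u,v} (lab C' x) (lab C' a2) (lab C' a1) (lab C' y)"
      using c2.mixed_case[OF pq(1) pq(2) h(1) h(2) h(3)] by blast
    then show ?thesis using E2' uv(1) by blast
  qed
qed



lemma rs_swap12: "resolved_by E e P Q R S \<Longrightarrow> resolved_by E e Q P R S"
  unfolding resolved_by_def by (meson conn_sym conn_trans)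
lemma rs_swap34: "resolved_by E e P Q R S \<Longrightarrow> resolved_by E e P Q S R"
  unfolding resolved_by_def by (meson conn_sym conn_trans)

lemma nbrs:
  assumes B: "binary_xtree X C" and c: "{v,c} \<in> edges C" and nl: "\<not> labeled X C v"
  shows "\<exists>\<alpha>1 \<alpha>2. {v,\<alpha>1} \<in> edges C \<and> {v,\<alpha>2} \<in> edges C \<and> \<alpha>1 \<noteq> \<alpha>2 \<and> \<alpha>1 \<noteq> c \<and> \<alpha>2 \<noteq> c"
proof -
  have F: "is_xforest X C" using bin_xf[OF B] .
  have vV: "v \<in> verts C" using edge_vert[OF F c] by simp
  have d: "deg (edges C) v = 3" using bin_vert[OF B vV] nl by auto
  define S where "S = {e\<in>edges C. v \<in> e}"
  have fS: "finite S" using xf_finE[OF F] S_def by simp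
  have cS: "card S = 3" using d S_def deg_def by simp
  have "card (S - {{v,c}}) = 2" using cS c S_def by (simp add: card_Diff_singleton)
  then obtain e1 e2 where e: "S - {{v,c}} = {e1,e2}" "e1 \<noteq> e2" by (auto simp: card_2_iff)
  have e1: "e1 \<in> edges C" "v \<in> e1" "e1 \<noteq> {v,c}" and e2: "e2 \<in> edges C" "v \<in> e2" "e2 \<noteq> {v,c}"
    using e(1) S_def by blast+
  obtain p1 q1 where pq1: "e1 = {p1,q1}" "p1 \<noteq> q1" using xforest_eform[OF F] e1(1) unfolding eform_def by blast
  obtain p2 q2 where pq2: "e2 = {p2,q2}" "p2 \<noteq> q2" using xforest_eform[OF F] e2(1) unfolding eform_def by blast
  obtain \<alpha>1 where a1: "e1 = {v,\<alpha>1}" using pq1 e1(2) by (auto simp: insert_commute)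
  obtain \<alpha>2 where a2: "e2 = {v,\<alpha>2}" using pq2 e2(2) by (auto simp: insert_commute)
  show ?thesis using a1 a2 e1 e2 e(2) by (rule_tac x=\<alpha>1 in exI, rule_tac x=\<alpha>2 in exI) auto
qed

lemma leafH:
  assumes F: "is_xforest X T" and st: "{s,t} \<in> edges T" "s \<noteq> t"
    and c1: "conn (edges T - {{s,t}}) s c1" and c2: "conn (edges T - {{s,t}}) s c2"
  shows "\<exists>y\<in>X. conn {e\<in>edges T. c1 \<notin> e \<and> s \<notin> e \<and> c2 \<notin> e} t (lab T y)"
proof -
  define E0 where "E0 = edges T - {{s,t}}"
  obtain y where y: "y \<in> X" "conn E0 t (lab T y)" using leaf_exists[OF F st] E0_def by blast
  have nts: "\<not> conn E0 t s" using xf_acyc'[OF F st(1)] conn_sym E0_def by blast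
  define G1 where "G1 = {e\<in>E0. s \<notin> e}"
  have g1: "conn G1 t (lab T y)" using conn_avoid[OF y(2) nts] G1_def by simp
  have n1: "\<not> conn G1 t c1"
  proof
    assume "conn G1 t c1"
    then have "conn E0 t c1" by (rule conn_mono) (auto simp: G1_def)
    then show False using nts conn_trans conn_sym c1 E0_def by metis
  qed
  define G2 where "G2 = {e\<in>G1. c1 \<notin> e}"
  have g2: "conn G2 t (lab T y)" using conn_avoid[OF g1 n1] G2_def by simp
  have n2: "\<not> conn G2 t c2"
  proof
    assume "conn G2 t c2"
    then have "conn E0 t c2" by (rule conn_mono) (auto simp: G2_def G1_def)
    then show False using nts conn_trans conn_sym c2 E0_def by metis
  qed
  have g3: "conn {e\<in>G2. c2 \<notin> e} t (lab T y)" using conn_avoid[OF g2 n2] by simp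
  have "conn {e\<in>edges T. c1 \<notin> e \<and> s \<notin> e \<and> c2 \<notin> e} t (lab T y)"
    by (rule conn_mono[OF g3]) (auto simp: G2_def G1_def E0_def)
  then show ?thesis using y(1) by blast
qed


lemma qres_contract_survive:
  assumes B: "binary_xtree X C" and uv: "{u,v} \<in> edges C" "u \<noteq> v"
    and r: "resolved_by (edges C) e (lab C p) (lab C q) (lab C r) (lab C s)" and ne: "e \<noteq> {u,v}"
  shows "qres (contract C u v) p q r s"
proof -
  have F: "is_xforest X C" using bin_xf[OF B] .
  have "resolved_by (cE (edges C) u v) (cg u v ` e) (cg u v (lab C p)) (cg u v (lab C q)) (cg u v (lab C r)) (cg u v (lab C s))"
    by (rule contract_survive[OF xforest_eform[OF F] uv xf_trifree[OF F uv] r ne])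
  then show ?thesis unfolding qres_def contract_simps by auto
qed

lemma qres_contract_back:
  assumes ef: "eform (edges C)" and uv: "{u,v} \<in> edges C" "u \<noteq> v" and tf: "trifree (edges C) u v"
    and q: "qres (contract C u v) p q r s"
  shows "qres C p q r s"
proof -
  obtain e where "resolved_by (cE (edges C) u v) e (cg u v (lab C p)) (cg u v (lab C q)) (cg u v (lab C r)) (cg u v (lab C s))"
    using q unfolding qres_def contract_simps by auto
  from contract_back[OF ef uv tf this] show ?thesis unfolding qres_def by blast
qed

lemma final_contra:
  assumes Bj: "binary_xtree X Cj" and Bk: "binary_xtree X Ck"
    and X: "x \<in> X" "a1 \<in> X" "a2 \<in> X" "b1 \<in> X" "b2 \<in> X"
    and sj: "((ai = a1 \<and> ao = a2) \<or> (ai = a2 \<and> ao = a1))" "e1 \<in> edges Cj"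
      "\<forall>y. (y = b1 \<or> y = b2) \<longrightarrow> resolved_by (edges Cj) e1 (lab Cj x) (lab Cj ai) (lab Cj ao) (lab Cj y)"
      "\<forall>a'. (a' = a1 \<or> a' = a2) \<longrightarrow> (\<exists>e2. e2 \<noteq> e1 \<and> resolved_by (edges Cj) e2 (lab Cj x) (lab Cj a') (lab Cj b1) (lab Cj b2))"
    and sk: "((bi = b1 \<and> bo = b2) \<or> (bi = b2 \<and> bo = b1))" "e1' \<in> edges Ck"
      "\<forall>y. (y = a1 \<or> y = a2) \<longrightarrow> resolved_by (edges Ck) e1' (lab Ck x) (lab Ck bi) (lab Ck bo) (lab Ck y)"
      "\<forall>b'. (b' = b1 \<or> b' = b2) \<longrightarrow> (\<exists>e2. e2 \<noteq> e1' \<and> resolved_by (edges Ck) e2 (lab Ck x) (lab Ck b') (lab Ck a1) (lab Ck a2))"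
    and uv: "{u,v} \<in> edges Cj" "u \<noteq> v"
    and tr: "\<And>p q r s. p \<in> X \<Longrightarrow> q \<in> X \<Longrightarrow> r \<in> X \<Longrightarrow> s \<in> X \<Longrightarrow> qres (contract Cj u v) p q r s \<Longrightarrow> qres Ck p q r s"
  shows False
proof -
  have efk: "eform (edges Ck)" using xforest_eform[OF bin_xf[OF Bk]] .
  have iX: "ai \<in> X" "ao \<in> X" "bi \<in> X" "bo \<in> X" using sj(1) sk(1) X by auto
  show False
  proof (cases "e1 = {u,v}")
    case False
    have r: "resolved_by (edges Cj) e1 (lab Cj x) (lab Cj ai) (lab Cj ao) (lab Cj bi)" using sj(3) sk(1) by blast
    have "qres Ck x ai ao bi" using tr[OF X(1) iX(1) iX(2) iX(3) qres_contract_survive[OF Bj uv r]] False by simp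
    then obtain e where e: "resolved_by (edges Ck) e (lab Ck x) (lab Ck ai) (lab Ck ao) (lab Ck bi)" unfolding qres_def by blast
    obtain e2 where e2: "resolved_by (edges Ck) e2 (lab Ck x) (lab Ck bi) (lab Ck a1) (lab Ck a2)" using sk(4) sk(1) by blast
    have e2': "resolved_by (edges Ck) e2 (lab Ck x) (lab Ck bi) (lab Ck ai) (lab Ck ao)" using e2 sj(1) rs_swap34 by blast
    show False using four_point[OF efk rs_swap34[OF e] e2'] .
  next
    case True
    obtain e2 where e2: "e2 \<noteq> e1" "resolved_by (edges Cj) e2 (lab Cj x) (lab Cj ao) (lab Cj b1) (lab Cj b2)" using sj(4) sj(1) by blast
    have "qres Ck x ao b1 b2" using tr[OF X(1) iX(2) X(4) X(5) qres_contract_survive[OF Bj uv e2(2)]] True e2(1) by simp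
    then obtain e where e: "resolved_by (edges Ck) e (lab Ck x) (lab Ck ao) (lab Ck b1) (lab Ck b2)" unfolding qres_def by blast
    have e': "resolved_by (edges Ck) e (lab Ck x) (lab Ck ao) (lab Ck bi) (lab Ck bo)" using e sk(1) rs_swap34 by blast
    have k: "resolved_by (edges Ck) e1' (lab Ck x) (lab Ck bi) (lab Ck bo) (lab Ck ao)" using sk(3) sj(1) by blast
    show False using four_point[OF efk e' rs_swap34[OF k]] .
  qed
qed


lemma nni_contract:
  assumes ub: "{u,b} \<in> edges C" and vc: "{v,c} \<in> edges C" and d: "b \<noteq> u" "b \<noteq> v" "c \<noteq> u" "c \<noteq> v" "u \<noteq> v"
  shows "contract (nni_move C u v b c) u v = contract C u v"
proof -
  define E where "E = edges C"
  define R where "R = E - {{u,v}} - {{u,b},{v,c}}"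
  have n1: "{u,b} \<noteq> {u,v}" "{v,c} \<noteq> {u,v}" "{u,c} \<noteq> {u,v}" "{v,b} \<noteq> {u,v}"
    using d by (auto simp: doubleton_eq_iff)
  have A: "edges (nni_move C u v b c) - {{u,v}} = R \<union> {{u,c},{v,b}}"
    unfolding nni_move_def R_def E_def using n1 by auto
  have B: "E - {{u,v}} = R \<union> {{u,b},{v,c}}" unfolding R_def using ub vc n1 E_def by auto
  have g: "cg u v ` {u,c} = {u,c}" "cg u v ` {v,b} = {u,b}" "cg u v ` {u,b} = {u,b}" "cg u v ` {v,c} = {u,c}"
    using d unfolding cg_def by auto
  have "cE (edges (nni_move C u v b c)) u v = cE (edges C) u v"
    unfolding cE_def A B[unfolded E_def] image_Un using g by auto
  moreover have "verts (nni_move C u v b c) = verts C" "lab (nni_move C u v b c) = lab C"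
    unfolding nni_move_def by auto
  ultimately show ?thesis unfolding contract_def cE_def cg_def Let_def by simp
qed

lemma nni_props:
  assumes F: "is_xforest X C" and uv: "{u,v} \<in> edges C" "u \<noteq> v"
    and ub: "{u,b} \<in> edges C" and vc: "{v,c} \<in> edges C" and d: "b \<noteq> u" "b \<noteq> v" "c \<noteq> u" "c \<noteq> v"
  shows "eform (edges (nni_move C u v b c))" "{u,v} \<in> edges (nni_move C u v b c)"
    "trifree (edges (nni_move C u v b c)) u v"
proof -
  have ef: "eform (edges C)" using xforest_eform[OF F] .
  have tf: "trifree (edges C) u v" using xf_trifree[OF F uv] .
  have bc: "b \<noteq> c" using tf ub vc unfolding trifree_def by blast
  have EN: "edges (nni_move C u v b c) = (edges C - {{u,b},{v,c}}) \<union> {{u,c},{v,b}}" unfolding nni_move_def by simp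
  show "eform (edges (nni_move C u v b c))" using ef d unfolding EN eform_def by blast
  show "{u,v} \<in> edges (nni_move C u v b c)" using uv d unfolding EN by (auto simp: doubleton_eq_iff)
  show "trifree (edges (nni_move C u v b c)) u v"
    unfolding trifree_def
  proof
    assume "\<exists>z. {u,z} \<in> edges (nni_move C u v b c) \<and> {v,z} \<in> edges (nni_move C u v b c)"
    then obtain z where z: "{u,z} \<in> edges (nni_move C u v b c)" "{v,z} \<in> edges (nni_move C u v b c)" by blast
    have zu: "({u,z} \<in> edges C \<and> z \<noteq> b) \<or> z = c"
      using z(1) d uv(2) unfolding EN by (auto simp: doubleton_eq_iff)
    have zv: "({v,z} \<in> edges C \<and> z \<noteq> c) \<or> z = b"
      using z(2) d uv(2) unfolding EN by (auto simp: doubleton_eq_iff)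
    show False using zu zv tf bc unfolding trifree_def by blast
  qed
qed


lemma eform_ne': "eform G \<Longrightarrow> {p,q} \<in> G \<Longrightarrow> p \<noteq> q"
  unfolding eform_def by (metis doubleton_eq_iff insert_absorb2)

theorem mainTheorem6:
  fixes n :: nat and Ci Cj Ck :: xforest
  assumes "n \<ge> 5"
    and "critical_triplet {1..n} Ci Cj Ck"
  shows "\<not> nni_adjacent {1..n} Cj Ck \<and>
         \<not> (\<exists>F. is_xforest {1..n} F \<and> covers {1..n} Cj F \<and> covers {1..n} Ck F)"
proof -
  define X where "X = {1..n}"
  have finX: "finite X" and cardX: "3 \<le> card X" using assms(1) unfolding X_def by auto
  have ct: "critical_triplet X Ci Cj Ck" using assms(2) X_def by simp
  have Bi: "binary_xtree X Ci" and Bj: "binary_xtree X Cj" and Bk: "binary_xtree X Ck"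
    using ct unfolding critical_triplet_def by auto
  obtain x w a b where xX: "x \<in> X" and
    c: "{lab Ci x, w} \<in> edges Ci" "w \<noteq> lab Ci x"
      "{w, a} \<in> edges Ci" "{w, b} \<in> edges Ci"
      "a \<noteq> b" "a \<noteq> w" "b \<noteq> w" "a \<noteq> lab Ci x" "b \<noteq> lab Ci x"
      "\<not> labeled X Ci w" "\<not> labeled X Ci a" "\<not> labeled X Ci b"
      "\<not> iso X Cj Ci" "covers X Cj (contract Ci w a)"
      "\<not> iso X Ck Ci" "covers X Ck (contract Ci w b)"
    using ct unfolding critical_triplet_def by blast
  have Fi: "is_xforest X Ci" using bin_xf[OF Bi] .
  have efi: "eform (edges Ci)" using xforest_eform[OF Fi] .
  have aw: "{a,w} \<in> edges Ci" and bw: "{b,w} \<in> edges Ci" using c(3,4) by (auto simp: insert_commute)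
  obtain \<alpha>1 \<alpha>2 where al: "{a,\<alpha>1} \<in> edges Ci" "{a,\<alpha>2} \<in> edges Ci" "\<alpha>1 \<noteq> \<alpha>2" "\<alpha>1 \<noteq> w" "\<alpha>2 \<noteq> w"
    using nbrs[OF Bi aw c(11)] by blast
  obtain \<beta>1 \<beta>2 where be: "{b,\<beta>1} \<in> edges Ci" "{b,\<beta>2} \<in> edges Ci" "\<beta>1 \<noteq> \<beta>2" "\<beta>1 \<noteq> w" "\<beta>2 \<noteq> w"
    using nbrs[OF Bi bw c(12)] by blast
  have an: "a \<noteq> \<alpha>1" "a \<noteq> \<alpha>2" "b \<noteq> \<beta>1" "b \<noteq> \<beta>2" using eform_ne'[OF efi] al be by auto
  have leafA: "\<exists>y\<in>X. conn {e\<in>edges Ci. w \<notin> e \<and> a \<notin> e \<and> b \<notin> e} \<alpha> (lab Ci y)"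
    if "{a,\<alpha>} \<in> edges Ci" "a \<noteq> \<alpha>" "\<alpha> \<noteq> w" for \<alpha>
  proof (rule leafH[OF Fi that(1,2)])
    have e1: "{a,w} \<in> edges Ci - {{a,\<alpha>}}" using aw that(3) by (auto simp: doubleton_eq_iff)
    have e2: "{w,b} \<in> edges Ci - {{a,\<alpha>}}" using c(4) c(5) c(6) by (auto simp: doubleton_eq_iff)
    show "conn (edges Ci - {{a,\<alpha>}}) a w" using conn_edge[OF e1] .
    show "conn (edges Ci - {{a,\<alpha>}}) a b" using conn_trans[OF conn_edge[OF e1] conn_edge[OF e2]] .
  qed
  have leafB: "\<exists>y\<in>X. conn {e\<in>edges Ci. w \<notin> e \<and> b \<notin> e \<and> a \<notin> e} \<beta> (lab Ci y)"
    if "{b,\<beta>} \<in> edges Ci" "b \<noteq> \<beta>" "\<beta> \<noteq> w" for \<beta>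
  proof (rule leafH[OF Fi that(1,2)])
    have e1: "{b,w} \<in> edges Ci - {{b,\<beta>}}" using bw that(3) by (auto simp: doubleton_eq_iff)
    have e2: "{w,a} \<in> edges Ci - {{b,\<beta>}}" using c(3) c(5) c(7) by (auto simp: doubleton_eq_iff)
    show "conn (edges Ci - {{b,\<beta>}}) b w" using conn_edge[OF e1] .
    show "conn (edges Ci - {{b,\<beta>}}) b a" using conn_trans[OF conn_edge[OF e1] conn_edge[OF e2]] .
  qed
  obtain a1 where a1: "a1 \<in> X" "conn {e\<in>edges Ci. w \<notin> e \<and> a \<notin> e \<and> b \<notin> e} \<alpha>1 (lab Ci a1)"
    using leafA[OF al(1) an(1) al(4)] by blast
  obtain a2 where a2: "a2 \<in> X" "conn {e\<in>edges Ci. w \<notin> e \<and> a \<notin> e \<and> b \<notin> e} \<alpha>2 (lab Ci a2)"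
    using leafA[OF al(2) an(2) al(5)] by blast
  obtain b1 where b1: "b1 \<in> X" "conn {e\<in>edges Ci. w \<notin> e \<and> b \<notin> e \<and> a \<notin> e} \<beta>1 (lab Ci b1)"
    using leafB[OF be(1) an(3) be(4)] by blast
  obtain b2 where b2: "b2 \<in> X" "conn {e\<in>edges Ci. w \<notin> e \<and> b \<notin> e \<and> a \<notin> e} \<beta>2 (lab Ci b2)"
    using leafB[OF be(2) an(4) be(5)] by blast
  have a1': "conn {e\<in>edges Ci. w \<notin> e \<and> b \<notin> e \<and> a \<notin> e} \<alpha>1 (lab Ci a1)" by (rule conn_mono[OF a1(2)]) auto
  have a2': "conn {e\<in>edges Ci. w \<notin> e \<and> b \<notin> e \<and> a \<notin> e} \<alpha>2 (lab Ci a2)" by (rule conn_mono[OF a2(2)]) auto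
  have b1': "conn {e\<in>edges Ci. w \<notin> e \<and> a \<notin> e \<and> b \<notin> e} \<beta>1 (lab Ci b1)" by (rule conn_mono[OF b1(2)]) auto
  have b2': "conn {e\<in>edges Ci. w \<notin> e \<and> a \<notin> e \<and> b \<notin> e} \<beta>2 (lab Ci b2)" by (rule conn_mono[OF b2(2)]) auto
  interpret cj: crit X Ci Cj x w a b \<alpha>1 \<alpha>2 \<beta>1 \<beta>2 a1 a2 b1 b2
    by (unfold_locales) (use Bi Bj finX cardX xX a1 a2 b1 b2 c al be a1' a2' b1' b2' in auto)
  interpret ck: crit X Ci Ck x w b a \<beta>1 \<beta>2 \<alpha>1 \<alpha>2 b1 b2 a1 a2
    by (unfold_locales) (use Bi Bk finX cardX xX a1 a2 b1 b2 c al be a1' a2' b1' b2' in auto)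
  obtain ai ao e1 where sj: "((ai = a1 \<and> ao = a2) \<or> (ai = a2 \<and> ao = a1))" "e1 \<in> edges Cj"
      "\<forall>y. (y = b1 \<or> y = b2) \<longrightarrow> resolved_by (edges Cj) e1 (lab Cj x) (lab Cj ai) (lab Cj ao) (lab Cj y)"
      "\<forall>a'. (a' = a1 \<or> a' = a2) \<longrightarrow> (\<exists>e2. e2 \<noteq> e1 \<and> resolved_by (edges Cj) e2 (lab Cj x) (lab Cj a') (lab Cj b1) (lab Cj b2))"
    using cj.main_struct by blast
  obtain bi bo e1' where sk: "((bi = b1 \<and> bo = b2) \<or> (bi = b2 \<and> bo = b1))" "e1' \<in> edges Ck"
      "\<forall>y. (y = a1 \<or> y = a2) \<longrightarrow> resolved_by (edges Ck) e1' (lab Ck x) (lab Ck bi) (lab Ck bo) (lab Ck y)"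
      "\<forall>b'. (b' = b1 \<or> b' = b2) \<longrightarrow> (\<exists>e2. e2 \<noteq> e1' \<and> resolved_by (edges Ck) e2 (lab Ck x) (lab Ck b') (lab Ck a1) (lab Ck a2))"
    using ck.main_struct by blast
  note fc = final_contra[OF Bj Bk xX a1(1) a2(1) b1(1) b2(1) sj sk]
  have Fk: "is_xforest X Ck" using bin_xf[OF Bk] .
  have Fj: "is_xforest X Cj" using bin_xf[OF Bj] .
  have part1: "\<not> nni_adjacent X Cj Ck"
  proof
    assume "nni_adjacent X Cj Ck"
    then obtain u v b' c' where nn: "{u, v} \<in> edges Cj" "u \<noteq> v"
        "{u, b'} \<in> edges Cj" "b' \<noteq> u" "b' \<noteq> v"
        "{v, c'} \<in> edges Cj" "c' \<noteq> v" "c' \<noteq> u"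
        "iso X Ck (nni_move Cj u v b' c')"
      unfolding nni_adjacent_def by blast
    note np = nni_props[OF Fj nn(1,2,3,6,4,5,8,7)]
    have eqc: "contract (nni_move Cj u v b' c') u v = contract Cj u v"
      using nni_contract[OF nn(3,6,4,5,8,7,2)] .
    show False
    proof (rule fc[OF nn(1,2)])
      fix p q r s assume X4: "p \<in> X" "q \<in> X" "r \<in> X" "s \<in> X" and h: "qres (contract Cj u v) p q r s"
      have "qres (nni_move Cj u v b' c') p q r s"
        using qres_contract_back[OF np(1) np(2) nn(2) np(3)] h eqc by simp
      then show "qres Ck p q r s" using iso_qres[OF Fk nn(9) X4] by simp
    qed
  qed
  have part2: "\<not> (\<exists>F. is_xforest X F \<and> covers X Cj F \<and> covers X Ck F)"
  proof
    assume "\<exists>F. is_xforest X F \<and> covers X Cj F \<and> covers X Ck F"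
    then obtain F where F: "is_xforest X F" "covers X Cj F" "covers X Ck F" by blast
    obtain u v where uv: "{u,v} \<in> edges Cj" "u \<noteq> v" "iso X F (contract Cj u v)"
      using bin_cover[OF Bj cardX finX F(2)] by blast
    obtain u2 v2 where uv2: "{u2,v2} \<in> edges Ck" "u2 \<noteq> v2" "iso X F (contract Ck u2 v2)"
      using bin_cover[OF Bk cardX finX F(3)] by blast
    show False
    proof (rule fc[OF uv(1,2)])
      fix p q r s assume X4: "p \<in> X" "q \<in> X" "r \<in> X" "s \<in> X" and h: "qres (contract Cj u v) p q r s"
      have "qres F p q r s" using iso_qres[OF F(1) uv(3) X4] h by simp
      then have "qres (contract Ck u2 v2) p q r s" using iso_qres[OF F(1) uv2(3) X4] by simp
      then show "qres Ck p q r s"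
        using qres_contract_back[OF xforest_eform[OF Fk] uv2(1,2) xf_trifree[OF Fk uv2(1,2)]] by simp
    qed
  qed
  show ?thesis using part1 part2 X_def by simp
qed


end
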